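(* Let $k$ be an algebraically closed field of characteristic $p>0$, $A=k[X,Y]$, and $F=(X^p+Y^{p+1})Y$. Then $k(F,Y)=k(X^p,Y)$, so $F$ is a good pseudo field generator in $A$; $F$ is a generally rational polynomial in $A$; and $F$ is not a field generator in $A$.
   Context: $F$ is a good pseudo field generator in $A$ if there is $G\in A$ with $\operatorname{Frac}A$ purely inseparable over $k(F,G)$. $F$ is a generally rational polynomial in $A$ if, for all but finitely many $\lambda\in k$, $F-\lambda$ is irreducible and $\operatorname{Frac}(A/(F-\lambda))$ is purely transcendental of transcendence degree $1$ over $k$. $F$ is a field generator in $A$ if $k(F,G)=\operatorname{Frac}A$ for some $G\in\operatorname{Frac}A$. *)

theory Defs
  imports "HOL-Computational_Algebra.Computational_Algebra"
begin

text \<open>The polynomial ring A = k[X,Y] is modelled as ('a poly) poly: the outer variable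
is Y, the coefficients are polynomials in X.  Frac A is ('a poly poly) fract.\<close>

definition polyX :: "'a::field poly poly" where
  "polyX = [:[:0, 1:]:]"

definition polyY :: "'a::field poly poly" where
  "polyY = [:0, 1:]"

definition polyC :: "'a::field \<Rightarrow> 'a poly poly" where
  "polyC c = [:[:c:]:]"

definition is_subfield :: "'b::field set \<Rightarrow> bool" where
  "is_subfield L \<longleftrightarrow> 0 \<in> L \<and> 1 \<in> L \<and>
     (\<forall>x\<in>L. \<forall>y\<in>L. x + y \<in> L \<and> x - y \<in> L \<and> x * y \<in> L) \<and>
     (\<forall>x\<in>L. inverse x \<in> L)"

definition gen_field :: "('a \<Rightarrow> 'b::field) \<Rightarrow> 'b set \<Rightarrow> 'b set" where
  "gen_field emb S = \<Inter>{L. is_subfield L \<and> range emb \<subseteq> L \<and> S \<subseteq> L}"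

definition kFrac :: "'a::field poly poly fract set \<Rightarrow> 'a poly poly fract set" where
  "kFrac S = gen_field (\<lambda>c. to_fract (polyC c)) S"

definition purely_insep_over :: "nat \<Rightarrow> 'a::field poly poly fract set \<Rightarrow> bool" where
  "purely_insep_over p L \<longleftrightarrow> (\<forall>h. \<exists>n. h ^ (p ^ n) \<in> L)"

definition good_pseudo_field_generator :: "nat \<Rightarrow> 'a::field poly poly \<Rightarrow> bool" where
  "good_pseudo_field_generator p F \<longleftrightarrow>
     (\<exists>G::'a poly poly. purely_insep_over p (kFrac {to_fract F, to_fract G}))"

definition field_generator :: "'a::field poly poly \<Rightarrow> bool" where
  "field_generator F \<longleftrightarrow>
     (\<exists>G::'a poly poly fract. kFrac {to_fract F, G} = UNIV)"

text \<open>Evaluation of P in k[X,Y] at (X,Y) := (u,v) in the rational function field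
k(t) = ('a poly) fract; this is the k-algebra homomorphism k[X,Y] -> k(t) determined by u, v.\<close>
definition eval_kt :: "'a::field poly poly \<Rightarrow> 'a poly fract \<Rightarrow> 'a poly fract \<Rightarrow> 'a poly fract" where
  "eval_kt P u v =
     poly (map_poly (\<lambda>c. poly (map_poly (\<lambda>a. to_fract [:a:]) c) u) P) v"

text \<open>Frac(A/(Q)) is k-isomorphic to k(t), i.e. purely transcendental of transcendence
degree 1 over k: equivalently there is a k-algebra map A -> k(t) with kernel exactly (Q)
whose image generates k(t) as a field over k.\<close>
definition rational_quotient :: "'a::field poly poly \<Rightarrow> bool" where
  "rational_quotient Q \<longleftrightarrow>
     (\<exists>u v :: 'a poly fract.
        (\<forall>P. eval_kt P u v = 0 \<longleftrightarrow> Q dvd P) \<and>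
        gen_field (\<lambda>c. to_fract [:c:]) {u, v} = UNIV)"

definition generally_rational :: "'a::field poly poly \<Rightarrow> bool" where
  "generally_rational F \<longleftrightarrow>
     finite {c::'a. \<not> (irreducible (F - polyC c) \<and> rational_quotient (F - polyC c))}"

end

theory Submission
  imports Defs
begin


section \<open>Frobenius\<close>

lemma frob_add:
  fixes x y :: "'b::comm_semiring_1"
  assumes "prime p" "of_nat p = (0::'b)"
  shows "(x + y) ^ p = x ^ p + y ^ p"
proof -
  have p0: "p > 0" using assms(1) prime_gt_0_nat by blast
  have "(x + y) ^ p = (\<Sum>k\<le>p. of_nat (p choose k) * x ^ k * y ^ (p - k))"
    by (rule binomial_ring)
  also have "\<dots> = (\<Sum>k\<in>{0,p}. of_nat (p choose k) * x ^ k * y ^ (p - k))"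
  proof (rule sum.mono_neutral_right)
    show "finite {..p}" by simp
    show "{0, p} \<subseteq> {..p}" by auto
    show "\<forall>i\<in>{..p} - {0, p}. of_nat (p choose i) * x ^ i * y ^ (p - i) = 0"
    proof
      fix i assume i: "i \<in> {..p} - {0, p}"
      hence "p dvd (p choose i)" using assms(1) p0 by (intro dvd_choose_prime) auto
      then obtain m where "p choose i = p * m" by blast
      hence "of_nat (p choose i) = (0::'b)" using assms(2) by simp
      thus "of_nat (p choose i) * x ^ i * y ^ (p - i) = 0" by simp
    qed
  qed
  also have "\<dots> = x ^ p + y ^ p" using p0 by (simp add: add.commute)
  finally show ?thesis .
qed

lemma frob_diff:
  fixes x y :: "'b::comm_ring_1"
  assumes "prime p" "of_nat p = (0::'b)"
  shows "(x - y) ^ p = x ^ p - y ^ p"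
proof -
  have "x ^ p = ((x - y) + y) ^ p" by simp
  also have "\<dots> = (x - y) ^ p + y ^ p" by (rule frob_add[OF assms])
  finally show ?thesis by simp
qed

lemma frob_sum:
  fixes f :: "'c \<Rightarrow> 'b::comm_semiring_1"
  assumes "prime p" "of_nat p = (0::'b)"
  shows "(sum f A) ^ p = (\<Sum>i\<in>A. f i ^ p)"
proof (induction A rule: infinite_finite_induct)
  case (infinite A) then show ?case using assms(1) prime_gt_0_nat by (simp add: zero_power)
next
  case empty then show ?case using assms(1) prime_gt_0_nat by (simp add: zero_power)
next
  case (insert x F) then show ?case by (simp add: frob_add[OF assms])
qed

lemma frob_inj:
  fixes x y :: "'b::idom"
  assumes "prime p" "of_nat p = (0::'b)" "x ^ p = y ^ p"
  shows "x = y"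
proof -
  have "(x - y) ^ p = 0" using frob_diff[OF assms(1,2)] assms(3) by simp
  thus ?thesis by simp
qed

section \<open>Ring homomorphisms\<close>

definition rhom :: "('b::comm_ring_1 \<Rightarrow> 'c::comm_ring_1) \<Rightarrow> bool" where
  "rhom h \<longleftrightarrow> h 0 = 0 \<and> h 1 = 1 \<and> (\<forall>a b. h (a + b) = h a + h b) \<and> (\<forall>a b. h (a * b) = h a * h b)"

lemma rhom_0: "rhom h \<Longrightarrow> h 0 = 0" by (simp add: rhom_def)
lemma rhom_1: "rhom h \<Longrightarrow> h 1 = 1" by (simp add: rhom_def)
lemma rhom_add: "rhom h \<Longrightarrow> h (a + b) = h a + h b" by (simp add: rhom_def)
lemma rhom_mult: "rhom h \<Longrightarrow> h (a * b) = h a * h b" by (simp add: rhom_def)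
lemma rhom_uminus: "rhom h \<Longrightarrow> h (- a) = - h a"
proof -
  assume h: "rhom h"
  have "h (- a) + h a = 0" using rhom_add[OF h, of "-a" a] rhom_0[OF h] by simp
  thus ?thesis by (simp add: eq_neg_iff_add_eq_0)
qed
lemma rhom_diff: "rhom h \<Longrightarrow> h (a - b) = h a - h b"
  using rhom_add[of h a "-b"] rhom_uminus[of h b] by simp
lemma rhom_power: "rhom h \<Longrightarrow> h (a ^ n) = h a ^ n"
  by (induction n) (simp_all add: rhom_1 rhom_mult)
lemma rhom_sum: "rhom h \<Longrightarrow> h (sum f A) = (\<Sum>i\<in>A. h (f i))"
  by (induction A rule: infinite_finite_induct) (simp_all add: rhom_0 rhom_add)
lemma rhom_of_nat: "rhom h \<Longrightarrow> h (of_nat n) = of_nat n"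
  by (induction n) (simp_all add: rhom_0 rhom_1 rhom_add)

lemma rhom_comp: "rhom h \<Longrightarrow> rhom g \<Longrightarrow> rhom (g \<circ> h)"
  by (simp add: rhom_def)

lemma rhom_id: "rhom (\<lambda>x. x)" by (simp add: rhom_def)

lemma rhom_to_fract: "rhom to_fract" by (simp add: rhom_def)

lemma rhom_const_poly: "rhom (\<lambda>c. [:c:])"
  by (simp add: rhom_def one_pCons)

lemma map_poly_add_hom:
  assumes "rhom h"
  shows "map_poly h (P + Q) = map_poly h P + map_poly h Q"
  by (intro poly_eqI) (simp add: coeff_map_poly rhom_0[OF assms] rhom_add[OF assms])

lemma map_poly_mult_hom:
  assumes h: "rhom h"
  shows "map_poly h (P * Q) = map_poly h P * map_poly h Q"
proof (induction P)
  case 0 then show ?case by simp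
next
  case (pCons a P)
  have "map_poly h (pCons a P * Q) = map_poly h (smult a Q + pCons 0 (P * Q))" by simp
  also have "\<dots> = smult (h a) (map_poly h Q) + pCons 0 (map_poly h P * map_poly h Q)"
    using pCons by (simp add: map_poly_add_hom[OF h] map_poly_smult rhom_0[OF h] rhom_mult[OF h]
        map_poly_pCons)
  also have "\<dots> = map_poly h (pCons a P) * map_poly h Q"
    by (simp add: map_poly_pCons rhom_0[OF h])
  finally show ?case .
qed

lemma rhom_poly_eval:
  assumes h: "rhom h"
  shows "rhom (\<lambda>P. poly (map_poly h P) x)"
  unfolding rhom_def
  by (simp add: rhom_1[OF h] map_poly_add_hom[OF h] map_poly_mult_hom[OF h])

lemma rhom_map_poly:
  assumes h: "rhom h"
  shows "rhom (map_poly h)"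
  unfolding rhom_def
  by (simp add: rhom_1[OF h] map_poly_add_hom[OF h] map_poly_mult_hom[OF h])

lemma rhom_poly_at: "rhom (\<lambda>P. poly P x)"
  by (simp add: rhom_def)

section \<open>Generation of k[X,Y]\<close>

lemma pCons_as_add: "pCons (a::'b::comm_ring_1) p = [:a:] + [:0, 1:] * p"
  by simp

lemma polyXY_induct [case_names C X Y add mult]:
  fixes P :: "'a::field poly poly \<Rightarrow> bool"
  assumes C: "\<And>c. P (polyC c)" and X: "P polyX" and Y: "P polyY"
    and add: "\<And>a b. P a \<Longrightarrow> P b \<Longrightarrow> P (a + b)"
    and mult: "\<And>a b. P a \<Longrightarrow> P b \<Longrightarrow> P (a * b)"
  shows "P a"
proof -
  have inner: "P [:c:]" for c
  proof (induction c)
    case 0 then show ?case using C[of 0] by (simp add: polyC_def)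
  next
    case (pCons e c)
    have "[:pCons e c:] = polyC e + polyX * [:c:]"
      by (simp add: polyC_def polyX_def)
    moreover have "P (polyC e + polyX * [:c:])" using add mult C X pCons by blast
    ultimately show ?case by simp
  qed
  show ?thesis
  proof (induction a)
    case 0 then show ?case using inner[of 0] by simp
  next
    case (pCons c a)
    have "pCons c a = [:c:] + polyY * a" by (simp add: polyY_def)
    moreover have "P ([:c:] + polyY * a)" using add mult inner Y pCons by blast
    ultimately show ?case by simp
  qed
qed

section \<open>Subfields\<close>

lemma gen_field_sub: "is_subfield (gen_field emb S)"
  unfolding gen_field_def is_subfield_def by blast

lemma gen_field_emb: "emb c \<in> gen_field emb S"
  unfolding gen_field_def by blast

lemma gen_field_gen: "x \<in> S \<Longrightarrow> x \<in> gen_field emb S"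
  unfolding gen_field_def by blast

lemma gen_field_least: "is_subfield L \<Longrightarrow> range emb \<subseteq> L \<Longrightarrow> S \<subseteq> L \<Longrightarrow> gen_field emb S \<subseteq> L"
  unfolding gen_field_def by blast

lemma subfield_0: "is_subfield L \<Longrightarrow> 0 \<in> L" by (simp add: is_subfield_def)
lemma subfield_1: "is_subfield L \<Longrightarrow> 1 \<in> L" by (simp add: is_subfield_def)
lemma subfield_add: "is_subfield L \<Longrightarrow> x \<in> L \<Longrightarrow> y \<in> L \<Longrightarrow> x + y \<in> L" by (simp add: is_subfield_def)
lemma subfield_diff: "is_subfield L \<Longrightarrow> x \<in> L \<Longrightarrow> y \<in> L \<Longrightarrow> x - y \<in> L" by (simp add: is_subfield_def)
lemma subfield_mult: "is_subfield L \<Longrightarrow> x \<in> L \<Longrightarrow> y \<in> L \<Longrightarrow> x * y \<in> L" by (simp add: is_subfield_def)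
lemma subfield_inverse: "is_subfield L \<Longrightarrow> x \<in> L \<Longrightarrow> inverse x \<in> L" by (simp add: is_subfield_def)
lemma subfield_divide: "is_subfield L \<Longrightarrow> x \<in> L \<Longrightarrow> y \<in> L \<Longrightarrow> x / y \<in> L"
  by (simp add: divide_inverse subfield_mult subfield_inverse)
lemma subfield_power: "is_subfield L \<Longrightarrow> x \<in> L \<Longrightarrow> x ^ n \<in> L"
  by (induction n) (simp_all add: subfield_1 subfield_mult)
lemma subfield_uminus: "is_subfield L \<Longrightarrow> x \<in> L \<Longrightarrow> - x \<in> L"
  using subfield_diff[of L 0 x] subfield_0[of L] by simp

lemma kFrac_sub: "is_subfield (kFrac S)" unfolding kFrac_def by (rule gen_field_sub)
lemma kFrac_const: "to_fract (polyC c) \<in> kFrac S" unfolding kFrac_def by (rule gen_field_emb)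
lemma kFrac_gen: "x \<in> S \<Longrightarrow> x \<in> kFrac S" unfolding kFrac_def by (rule gen_field_gen)
lemma kFrac_least: "is_subfield L \<Longrightarrow> (\<And>c. to_fract (polyC c) \<in> L) \<Longrightarrow> S \<subseteq> L \<Longrightarrow> kFrac S \<subseteq> L"
  unfolding kFrac_def by (rule gen_field_least) auto




definition is_der :: "('b::comm_ring_1 \<Rightarrow> 'b) \<Rightarrow> bool" where
  "is_der D \<longleftrightarrow> (\<forall>x y. D (x + y) = D x + D y) \<and> (\<forall>x y. D (x * y) = x * D y + y * D x)"

lemma der_add: "is_der D \<Longrightarrow> D (x + y) = D x + D y" by (simp add: is_der_def)
lemma der_mult: "is_der D \<Longrightarrow> D (x * y) = x * D y + y * D x" by (simp add: is_der_def)
lemma der_0: "is_der D \<Longrightarrow> D 0 = 0" using der_add[of D 0 0] by simp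
lemma der_1: "is_der D \<Longrightarrow> D 1 = 0" using der_mult[of D 1 1] by simp
lemma der_uminus: "is_der D \<Longrightarrow> D (- x) = - D x"
  using der_add[of D x "-x"] der_0[of D] by (simp add: eq_neg_iff_add_eq_0 add.commute)
lemma der_diff: "is_der D \<Longrightarrow> D (x - y) = D x - D y"
  using der_add[of D x "-y"] der_uminus[of D y] by simp
lemma der_power: "is_der D \<Longrightarrow> D (x ^ Suc n) = of_nat (Suc n) * x ^ n * D x"
proof (induction n)
  case 0 then show ?case by simp
next
  case (Suc n)
  have "D (x ^ Suc (Suc n)) = x * D (x ^ Suc n) + x ^ Suc n * D x"
    using der_mult[OF Suc.prems, of x "x ^ Suc n"] by simp
  also have "\<dots> = of_nat (Suc (Suc n)) * x ^ Suc n * D x" using Suc by (simp add: algebra_simps)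
  finally show ?case .
qed
lemma der_sum: "is_der D \<Longrightarrow> D (sum f A) = (\<Sum>i\<in>A. D (f i))"
  by (induction A rule: infinite_finite_induct) (simp_all add: der_0 der_add)

lemma is_der_pderiv: "is_der (pderiv :: 'b::idom poly \<Rightarrow> _)"
  by (simp add: is_der_def pderiv_add pderiv_mult)

lemma pderiv_sum: "pderiv (sum f A) = (\<Sum>i\<in>A. pderiv (f i))"
  for f :: "_ \<Rightarrow> 'b::idom poly"
  by (rule der_sum[OF is_der_pderiv])

lemma is_der_mpderiv: "is_der (map_poly (pderiv :: 'b::idom poly \<Rightarrow> _))"
  unfolding is_der_def
proof (intro conjI allI)
  fix x y :: "'b poly poly"
  show "map_poly pderiv (x + y) = map_poly pderiv x + map_poly pderiv y"
    by (intro poly_eqI) (simp add: coeff_map_poly pderiv_add)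
  show "map_poly pderiv (x * y) = x * map_poly pderiv y + y * map_poly pderiv x"
  proof (rule poly_eqI)
    fix n
    have "coeff (map_poly pderiv (x * y)) n = (\<Sum>i\<le>n. pderiv (coeff x i * coeff y (n - i)))"
      by (simp add: coeff_map_poly coeff_mult pderiv_sum)
    also have "\<dots> = (\<Sum>i\<le>n. coeff x i * pderiv (coeff y (n - i))) + (\<Sum>i\<le>n. pderiv (coeff x i) * coeff y (n - i))"
      by (simp add: pderiv_mult sum.distrib algebra_simps)
    also have "\<dots> = coeff (x * map_poly pderiv y) n + coeff (map_poly pderiv x * y) n"
      by (simp add: coeff_mult coeff_map_poly)
    finally show "coeff (map_poly pderiv (x * y)) n = coeff (x * map_poly pderiv y + y * map_poly pderiv x) n"
      by (simp add: mult.commute)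
  qed
qed

section \<open>Derivations on fraction fields\<close>

definition fD :: "('b::idom \<Rightarrow> 'b) \<Rightarrow> 'b fract \<Rightarrow> 'b fract" where
  "fD D h = (SOME z. \<forall>a b. b \<noteq> 0 \<longrightarrow> h = Fract a b \<longrightarrow> z = Fract (D a * b - a * D b) (b * b))"

lemma fD_welldef:
  fixes D :: "'b::idom \<Rightarrow> 'b"
  assumes D: "is_der D" and b: "b \<noteq> 0" and b': "b' \<noteq> 0" and eq: "Fract a b = Fract a' b'"
  shows "Fract (D a * b - a * D b) (b * b) = Fract (D a' * b' - a' * D b') (b' * b')"
proof -
  have h1: "a * b' = a' * b" using eq b b' by (simp add: eq_fract)
  have h2: "a * D b' + b' * D a = a' * D b + b * D a'"
    using arg_cong[OF h1, of D] by (simp add: der_mult[OF D])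
  have "(D a * b - a * D b) * (b' * b') = (D a' * b' - a' * D b') * (b * b)"
  proof -
    have "(D a * b - a * D b) * (b' * b') - (D a' * b' - a' * D b') * (b * b)
        = b * b' * (a * D b' + b' * D a - (a' * D b + b * D a')) + (a' * b - a * b') * (b * D b' + b' * D b)"
      by (simp add: algebra_simps)
    also have "\<dots> = 0" by (simp add: h1 h2)
    finally show ?thesis by simp
  qed
  thus ?thesis using b b' by (simp add: eq_fract)
qed

lemma fD_Fract:
  assumes D: "is_der D" and b: "b \<noteq> 0"
  shows "fD D (Fract a b) = Fract (D a * b - a * D b) (b * b)"
  unfolding fD_def
proof (rule someI2[where a = "Fract (D a * b - a * D b) (b * b)"])
  show "\<forall>a' b'. b' \<noteq> 0 \<longrightarrow> Fract a b = Fract a' b' \<longrightarrow>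
      Fract (D a * b - a * D b) (b * b) = Fract (D a' * b' - a' * D b') (b' * b')"
    using fD_welldef[OF D b] by blast
next
  fix z assume "\<forall>a' b'. b' \<noteq> 0 \<longrightarrow> Fract a b = Fract a' b' \<longrightarrow> z = Fract (D a' * b' - a' * D b') (b' * b')"
  thus "z = Fract (D a * b - a * D b) (b * b)" using b by blast
qed

lemma fD_to_fract: "is_der D \<Longrightarrow> fD D (to_fract a) = to_fract (D a)"
  unfolding to_fract_def by (simp add: fD_Fract der_1)

lemma fD_add:
  assumes D: "is_der D"
  shows "fD D (x + y) = fD D x + fD D y"
proof (cases x)
  case (Fract a b)
  show ?thesis
  proof (cases y)
    case (Fract c d)
    have "x + y = Fract (a * d + c * b) (b * d)" using \<open>x = Fract a b\<close> \<open>y = Fract c d\<close> \<open>b \<noteq> 0\<close> \<open>d \<noteq> 0\<close> by simp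
    thus ?thesis using \<open>x = Fract a b\<close> \<open>y = Fract c d\<close> \<open>b \<noteq> 0\<close> \<open>d \<noteq> 0\<close>
      by (simp add: fD_Fract[OF D] der_add[OF D] der_mult[OF D] eq_fract algebra_simps)
  qed
qed

lemma fD_mult:
  assumes D: "is_der D"
  shows "fD D (x * y) = x * fD D y + y * fD D x"
proof (cases x)
  case (Fract a b)
  show ?thesis
  proof (cases y)
    case (Fract c d)
    have "x * y = Fract (a * c) (b * d)" using \<open>x = Fract a b\<close> \<open>y = Fract c d\<close> by simp
    thus ?thesis using \<open>x = Fract a b\<close> \<open>y = Fract c d\<close> \<open>b \<noteq> 0\<close> \<open>d \<noteq> 0\<close>
      by (simp add: fD_Fract[OF D] der_add[OF D] der_mult[OF D] eq_fract algebra_simps)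
  qed
qed

lemma is_der_fD: "is_der D \<Longrightarrow> is_der (fD D)"
  by (simp add: is_der_def fD_add fD_mult)

lemma fD_inverse:
  assumes D: "is_der D" and "fD D x = 0"
  shows "fD D (inverse x) = 0"
proof (cases x)
  case (Fract a b)
  show ?thesis
  proof (cases "a = 0")
    case True thus ?thesis using Fract by (simp add: eq_fract der_0[OF is_der_fD[OF D]] Zero_fract_def[symmetric])
  next
    case False
    have "Fract (D a * b - a * D b) (b * b) = 0" using assms Fract by (simp add: fD_Fract[OF D])
    hence "D a * b - a * D b = 0" using Fract by (simp add: Zero_fract_def eq_fract)
    thus ?thesis using Fract False by (simp add: fD_Fract[OF D] Zero_fract_def eq_fract algebra_simps)
  qed
qed

lemma fD_kernel_subfield:
  assumes D: "is_der D"
  shows "is_subfield {h. fD D h = 0}"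
  unfolding is_subfield_def
  using der_0[OF is_der_fD[OF D]] der_1[OF is_der_fD[OF D]] der_add[OF is_der_fD[OF D]]
    der_diff[OF is_der_fD[OF D]] der_mult[OF is_der_fD[OF D]] fD_inverse[OF D]
  by auto

section \<open>Chain rule\<close>

lemma poly_map_scale:
  assumes "h 0 = 0"
  shows "poly (map_poly (\<lambda>c. h c * k) R) x = poly (map_poly h R) x * k"
  using assms by (induction R) (simp_all add: map_poly_pCons algebra_simps)

lemma chain_rule:
  fixes \<delta> :: "'c::field \<Rightarrow> 'c"
  assumes d: "is_der \<delta>" and h: "rhom h"
  shows "\<delta> (poly (map_poly h r) x) = poly (map_poly (\<lambda>c. \<delta> (h c)) r) x + poly (map_poly h (pderiv r)) x * \<delta> x"
proof (induction r)
  case 0 then show ?case by (simp add: der_0[OF d])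
next
  case (pCons c r)
  have h0: "h 0 = 0" by (rule rhom_0[OF h])
  have d0: "\<delta> (h 0) = 0" using h0 der_0[OF d] by simp
  have "\<delta> (poly (map_poly h (pCons c r)) x) = \<delta> (h c) + (x * \<delta> (poly (map_poly h r) x) + poly (map_poly h r) x * \<delta> x)"
    by (simp add: map_poly_pCons h0 der_add[OF d] der_mult[OF d])
  also have "\<dots> = poly (map_poly (\<lambda>c. \<delta> (h c)) (pCons c r)) x + poly (map_poly h (pderiv (pCons c r))) x * \<delta> x"
    using pCons map_poly_pCons[where f="\<lambda>c. \<delta> (h c)", OF d0, of c r]
    by (simp add: map_poly_pCons h0 pderiv_pCons map_poly_add_hom[OF h] algebra_simps)
  finally show ?case .
qed




lemma char_facts:
  assumes "CHAR('a::field) = p" "p > 0"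
  shows "prime p" "of_nat p = (0::'a)" "of_nat p = (0::'a poly)" "of_nat p = (0::'a poly poly)"
    "of_nat p = (0::'a poly fract)" "of_nat p = (0::'a poly poly fract)"
proof -
  show "prime p" using prime_CHAR_semidom[of] assms by (metis)
  show a: "of_nat p = (0::'a)" using assms(1) of_nat_CHAR by metis
  show b: "of_nat p = (0::'a poly)" using a by (simp add: of_nat_poly)
  show c: "of_nat p = (0::'a poly poly)" using b by (metis of_nat_poly pCons_0_0)
  show "of_nat p = (0::'a poly fract)" using b by (simp add: of_nat_fract Zero_fract_def)
  show "of_nat p = (0::'a poly poly fract)" using c by (simp add: of_nat_fract Zero_fract_def)
qed

lemma to_fract_power: "to_fract (x ^ n) = to_fract x ^ n"
  by (rule rhom_power[OF rhom_to_fract])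

lemma part1:
  fixes F :: "'a::field poly poly"
  assumes F: "F = (polyX ^ p + polyY ^ (p + 1)) * polyY"
  shows "kFrac {to_fract F, to_fract polyY} = kFrac {to_fract (polyX ^ p), to_fract polyY}"
proof
  have Y0: "to_fract (polyY :: 'a poly poly) \<noteq> 0" by (simp add: polyY_def)
  show "kFrac {to_fract F, to_fract polyY} \<subseteq> kFrac {to_fract (polyX ^ p), to_fract polyY}"
  proof (rule kFrac_least[OF kFrac_sub])
    show "to_fract (polyC c) \<in> kFrac {to_fract (polyX ^ p), to_fract polyY}" for c
      by (rule kFrac_const)
    have "to_fract F = (to_fract (polyX ^ p) + to_fract polyY ^ (p + 1)) * to_fract polyY"
      by (simp add: F to_fract_power)
    moreover have "\<dots> \<in> kFrac {to_fract (polyX ^ p), to_fract polyY}"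
      by (intro subfield_mult subfield_add subfield_power kFrac_sub kFrac_gen) auto
    ultimately show "{to_fract F, to_fract polyY} \<subseteq> kFrac {to_fract (polyX ^ p), to_fract polyY}"
      by (auto intro: kFrac_gen)
  qed
  show "kFrac {to_fract (polyX ^ p), to_fract polyY} \<subseteq> kFrac {to_fract F, to_fract polyY}"
  proof (rule kFrac_least[OF kFrac_sub])
    show "to_fract (polyC c) \<in> kFrac {to_fract F, to_fract polyY}" for c
      by (rule kFrac_const)
    have "to_fract (polyX ^ p) = to_fract F / to_fract polyY - to_fract polyY ^ (p + 1)"
      using Y0 by (simp add: F to_fract_power field_simps)
    moreover have "\<dots> \<in> kFrac {to_fract F, to_fract polyY}"
      by (intro subfield_diff subfield_divide subfield_power kFrac_sub kFrac_gen) auto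
    ultimately show "{to_fract (polyX ^ p), to_fract polyY} \<subseteq> kFrac {to_fract F, to_fract polyY}"
      by (auto intro: kFrac_gen)
  qed
qed

lemma part2:
  fixes F :: "'a::field poly poly"
  assumes F: "F = (polyX ^ p + polyY ^ (p + 1)) * polyY"
    and ch: "CHAR('a) = p" "p > 0"
  shows "good_pseudo_field_generator p F"
proof -
  note cf = char_facts[OF ch]
  define M where "M = kFrac {to_fract (polyX ^ p), to_fract (polyY :: 'a poly poly)}"
  have M: "is_subfield M" unfolding M_def by (rule kFrac_sub)
  have pw: "to_fract a ^ p \<in> M" for a :: "'a poly poly"
  proof (induction a rule: polyXY_induct)
    case (C c) show ?case using M unfolding M_def by (intro subfield_power kFrac_const)
  next
    case X show ?case unfolding M_def by (simp add: to_fract_power[symmetric] kFrac_gen)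
  next
    case Y show ?case using M unfolding M_def by (intro subfield_power kFrac_gen) auto
  next
    case (add a b) then show ?case by (simp add: frob_add[OF cf(1) cf(6)] subfield_add[OF M])
  next
    case (mult a b) then show ?case by (simp add: power_mult_distrib subfield_mult[OF M])
  qed
  have "h ^ (p ^ 1) \<in> M" for h
  proof (cases h)
    case (Fract a b)
    hence "h ^ (p ^ 1) = to_fract a ^ p / to_fract b ^ p" by (simp add: Fract_conv_to_fract power_divide)
    thus ?thesis using pw M by (simp add: subfield_divide)
  qed
  hence "purely_insep_over p (kFrac {to_fract F, to_fract polyY})"
    unfolding purely_insep_over_def part1[OF F] M_def by blast
  thus ?thesis unfolding good_pseudo_field_generator_def by blast
qed




lemma nat_mult_ne_Suc_mult:
  fixes q x y :: nat
  assumes "q \<ge> 2"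
  shows "q * x \<noteq> Suc (q * y)"
proof
  assume h: "q * x = Suc (q * y)"
  show False
  proof (cases "x \<le> y")
    case True
    hence "q * x \<le> q * y" by simp
    thus False using h by simp
  next
    case False
    hence "x \<ge> Suc y" by simp
    hence "q * Suc y \<le> q * x" by (rule mult_le_mono2)
    thus False using h assms by simp
  qed
qed

lemma pderiv_frob:
  fixes a :: "'a::field poly"
  assumes "of_nat p = (0::'a)"
  shows "pderiv (a ^ p) = 0"
proof -
  show ?thesis by (simp add: pderiv_power assms)
qed

lemma pderiv_pow_char:
  fixes h :: "'a::field poly"
  assumes "of_nat p = (0::'a)" "n \<ge> 1"
  shows "pderiv (h ^ (p + n)) = of_nat n * h ^ (p + n - 1) * pderiv h"
proof -
  obtain m where m: "p + n = Suc m" using assms(2) by (metis add_Suc_right not_one_le_zero old.nat.exhaust)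
  have "pderiv (h ^ (p + n)) = smult (of_nat (p + n)) (h ^ m) * pderiv h"
    unfolding m by (rule pderiv_power_Suc)
  also have "(of_nat (p + n) :: 'a) = of_nat n" using assms(1) by simp
  also have "smult (of_nat n) (h ^ m) = of_nat n * h ^ m" by (simp add: of_nat_poly)
  finally show ?thesis using m by simp
qed

lemma pow_one_minus:
  fixes x :: "'b::comm_ring_1"
  shows "\<exists>r. (1 - x) ^ n = 1 - x * r"
proof (induction n)
  case 0 show ?case by (intro exI[of _ 0]) simp
next
  case (Suc n)
  then obtain r where r: "(1 - x) ^ n = 1 - x * r" by blast
  show ?case by (intro exI[of _ "1 + r - x * r"]) (simp add: r algebra_simps)
qed

lemma bezout_pow:
  fixes a b :: "'b::comm_ring_1"
  assumes "u * a + w * b = 1"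
  shows "\<exists>u' w'. u' * a ^ n + w' * b = 1"
proof -
  have "u * a = 1 - w * b" using assms by (simp add: algebra_simps)
  hence "(u * a) ^ n = (1 - w * b) ^ n" by simp
  moreover obtain r where "(1 - w * b) ^ n = 1 - (w * b) * r" using pow_one_minus by blast
  ultimately have "u ^ n * a ^ n + (w * r) * b = 1" by (simp add: power_mult_distrib algebra_simps)
  thus ?thesis by blast
qed

lemma bezout_field_poly:
  fixes a b :: "'a::field poly"
  assumes "coprime a b"
  shows "\<exists>u w. u * a + w * b = 1"
proof -
  define S where "S = {h. h \<noteq> 0 \<and> (\<exists>u w. h = u * a + w * b)}"
  have ab: "a \<noteq> 0 \<or> b \<noteq> 0"
  proof (rule ccontr)
    assume "\<not> (a \<noteq> 0 \<or> b \<noteq> 0)"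
    hence "a = 0" "b = 0" by auto
    thus False using assms by simp
  qed
  have ne: "\<exists>h. h \<in> S"
  proof (cases "a = 0")
    case True
    hence "b \<noteq> 0" using ab by simp
    moreover have "b = 0 * a + 1 * b" by simp
    ultimately have "b \<in> S" unfolding S_def by blast
    thus ?thesis by blast
  next
    case False
    moreover have "a = 1 * a + 0 * b" by simp
    ultimately have "a \<in> S" unfolding S_def by blast
    thus ?thesis by blast
  qed
  define n where "n = (LEAST n. \<exists>h\<in>S. degree h = n)"
  have "\<exists>h\<in>S. degree h = n" unfolding n_def using ne by (rule_tac LeastI_ex) blast
  then obtain h where hS: "h \<in> S" and hn: "degree h = n" by blast
  have hmin: "degree h \<le> degree h'" if "h' \<in> S" for h'
    unfolding hn n_def using that by (intro Least_le) blast
  obtain u w where huw: "h = u * a + w * b" and h0: "h \<noteq> 0" using hS unfolding S_def by blast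
  have dvd: "h dvd c" if "c = u' * a + w' * b" for c u' w'
  proof (rule ccontr)
    assume nd: "\<not> h dvd c"
    hence r0: "c mod h \<noteq> 0" by (simp add: mod_eq_0_iff_dvd)
    have "c mod h = c - (c div h) * h" by (simp add: minus_div_mult_eq_mod)
    also have "\<dots> = (u' - (c div h) * u) * a + (w' - (c div h) * w) * b"
      using that huw by (simp add: algebra_simps)
    finally have "c mod h \<in> S" using r0 unfolding S_def by blast
    hence "degree h \<le> degree (c mod h)" by (rule hmin)
    moreover have "degree (c mod h) < degree h" by (rule degree_mod_less'[OF h0 r0])
    ultimately show False by simp
  qed
  have "h dvd a" by (rule dvd[of a 1 0]) simp
  moreover have "h dvd b" by (rule dvd[of b 0 1]) simp
  ultimately have "is_unit h" using assms coprime_common_divisor by blast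
  then obtain k where "1 = h * k" by (auto elim: dvdE)
  hence "(k * u) * a + (k * w) * b = 1" using huw by (simp add: algebra_simps)
  thus ?thesis by blast
qed

lemma coprime_decomp:
  fixes a b :: "'a::field poly"
  assumes "b \<noteq> 0"
  shows "\<exists>d f g. a = f * d \<and> b = g * d \<and> coprime f g \<and> d \<noteq> 0"
  using assms
proof (induction "degree b" arbitrary: a b rule: less_induct)
  case (less b a)
  show ?case
  proof (cases "coprime a b")
    case True
    thus ?thesis using less.prems by (intro exI[of _ 1] exI[of _ a] exI[of _ b]) auto
  next
    case False
    then obtain c where c: "c dvd a" "c dvd b" "\<not> is_unit c" unfolding coprime_def by blast
    obtain a' where a': "a = c * a'" using c(1) by blast
    obtain b' where b': "b = c * b'" using c(2) by blast
    have c0: "c \<noteq> 0" "b' \<noteq> 0" using b' less.prems by auto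
    have "degree c > 0" using c(3) c0 is_unit_iff_degree by blast
    hence "degree b' < degree b" using b' c0 by (simp add: degree_mult_eq)
    then obtain d f g where "a' = f * d" "b' = g * d" "coprime f g" "d \<noteq> 0"
      using less.hyps c0(2) by blast
    thus ?thesis using a' b' c0 by (intro exI[of _ "c * d"] exI[of _ f] exI[of _ g]) auto
  qed
qed

lemma nosol:
  fixes a1 b1 a2 b2 :: "'a::field poly"
  assumes pr: "prime p" and ch: "of_nat p = (0::'a)"
    and b1: "b1 \<noteq> 0" and b2: "b2 \<noteq> 0"
    and eq: "a2 * a1 ^ p * b2 ^ (p + 1) + a2 ^ (p + 2) * b1 ^ p = [:0, 1:] * b1 ^ p * b2 ^ (p + 2)"
  shows False
proof -
  define s :: "'a poly" where "s = [:0, 1:]"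
  have chp: "(of_nat p :: 'a poly) = 0" using ch by (simp add: of_nat_poly)
  have p2: "p \<ge> 2" using pr prime_ge_2_nat by blast
  obtain d f g where fg: "a2 = f * d" "b2 = g * d" "coprime f g" and d0: "d \<noteq> 0"
    using coprime_decomp[OF b2] by blast
  have g0: "g \<noteq> 0" using fg b2 by auto
  define \<alpha> where "\<alpha> = a1 ^ p"
  define \<beta> where "\<beta> = b1 ^ p"
  have beta0: "\<beta> \<noteq> 0" using b1 by (simp add: \<beta>_def)
  have "d ^ (p + 2) * (f * \<alpha> * g ^ (p + 1) + f ^ (p + 2) * \<beta>) = d ^ (p + 2) * (s * \<beta> * g ^ (p + 2))"
  proof -
    have "d ^ (p + 2) * (f * \<alpha> * g ^ (p + 1) + f ^ (p + 2) * \<beta>) =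
        a2 * a1 ^ p * b2 ^ (p + 1) + a2 ^ (p + 2) * b1 ^ p"
      using fg unfolding \<alpha>_def \<beta>_def
      by (simp add: power_mult_distrib algebra_simps)
    also have "\<dots> = s * b1 ^ p * b2 ^ (p + 2)" using eq s_def by simp
    also have "\<dots> = d ^ (p + 2) * (s * \<beta> * g ^ (p + 2))"
      using fg unfolding \<beta>_def by (simp add: power_mult_distrib algebra_simps)
    finally show ?thesis .
  qed
  hence E: "f * \<alpha> * g ^ (p + 1) + f ^ (p + 2) * \<beta> = s * \<beta> * g ^ (p + 2)"
    using d0 by simp
  have f0: "f \<noteq> 0"
  proof
    assume "f = 0"
    with E have "s * \<beta> * g ^ (p + 2) = 0" by (simp add: zero_power)
    thus False using beta0 g0 s_def by simp
  qed
  have degs: "(p + 2) * degree h \<noteq> degree (s * g ^ (p + 2))" for h :: "'a poly"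
  proof -
    have "degree (s * g ^ (p + 2)) = Suc ((p + 2) * degree g)"
      using g0 by (simp add: s_def degree_mult_eq degree_power_eq)
    thus ?thesis using nat_mult_ne_Suc_mult[of "p + 2"] by simp
  qed
  have alpha0: "\<alpha> \<noteq> 0"
  proof
    assume "\<alpha> = 0"
    with E have "f ^ (p + 2) * \<beta> = s * g ^ (p + 2) * \<beta>" by (simp add: algebra_simps)
    hence "f ^ (p + 2) = s * g ^ (p + 2)" using beta0 by simp
    hence "degree (f ^ (p + 2)) = degree (s * g ^ (p + 2))" by simp
    moreover have "degree (f ^ (p + 2)) = (p + 2) * degree f" by (rule degree_power_eq[OF f0])
    ultimately show False using degs[of f] by simp
  qed
  define P where "P = s * g ^ (p + 2) - f ^ (p + 2)"
  define Q where "Q = f * g ^ (p + 1)"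
  have QP: "Q * \<alpha> = P * \<beta>" using E unfolding P_def Q_def by (simp add: algebra_simps)
  have da: "pderiv \<alpha> = 0" unfolding \<alpha>_def by (rule pderiv_frob[OF ch])
  have db: "pderiv \<beta> = 0" unfolding \<beta>_def by (rule pderiv_frob[OF ch])
  have QP': "pderiv Q * \<alpha> = pderiv P * \<beta>"
    using arg_cong[OF QP, of pderiv] by (simp add: pderiv_mult da db mult.commute)
  have "\<alpha> * (pderiv P * Q - P * pderiv Q) = 0"
  proof -
    have "\<alpha> * (pderiv P * Q - P * pderiv Q) = pderiv P * (Q * \<alpha>) - P * (pderiv Q * \<alpha>)"
      by (simp add: algebra_simps)
    also have "\<dots> = pderiv P * (P * \<beta>) - P * (pderiv P * \<beta>)" by (simp only: QP QP')
    also have "\<dots> = 0" by (simp add: algebra_simps)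
    finally show ?thesis .
  qed
  hence W0: "pderiv P * Q - P * pderiv Q = 0" using alpha0 by simp
  define M where "M = s * g ^ (p + 2) + f ^ (p + 2)"
  define W where "W = pderiv f * g - f * pderiv g"
  have c2: "(of_nat (p + 2) :: 'a poly) = 2" using chp by simp
  have c1: "(of_nat (p + 1) :: 'a poly) = 1" using chp by simp
  have hg: "pderiv (g ^ (p + 2)) = 2 * g ^ (p + 1) * pderiv g"
    using pderiv_pow_char[OF ch, of 2 g] by simp
  have hf: "pderiv (f ^ (p + 2)) = 2 * f ^ (p + 1) * pderiv f"
    using pderiv_pow_char[OF ch, of 2 f] by simp
  have hg1: "pderiv (g ^ (p + 1)) = g ^ p * pderiv g"
    using pderiv_pow_char[OF ch, of 1 g] by simp
  have ds: "pderiv s = 1" by (simp add: s_def pderiv_pCons)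
  have "pderiv P = pderiv s * g ^ (p + 2) + s * pderiv (g ^ (p + 2)) - pderiv (f ^ (p + 2))"
    unfolding P_def by (simp only: pderiv_diff pderiv_mult) (simp add: algebra_simps)
  also have "\<dots> = g ^ (p + 2) + 2 * s * g ^ (p + 1) * pderiv g - 2 * f ^ (p + 1) * pderiv f"
    unfolding hg hf ds by (simp add: algebra_simps)
  finally have dP: "pderiv P = g ^ (p + 2) + 2 * s * g ^ (p + 1) * pderiv g - 2 * f ^ (p + 1) * pderiv f" .
  have "pderiv Q = f * pderiv (g ^ (p + 1)) + g ^ (p + 1) * pderiv f"
    unfolding Q_def by (simp only: pderiv_mult)
  also have "\<dots> = pderiv f * g ^ (p + 1) + f * g ^ p * pderiv g"
    unfolding hg1 by (simp add: algebra_simps)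
  finally have dQ: "pderiv Q = pderiv f * g ^ (p + 1) + f * g ^ p * pderiv g" .
  have ident: "pderiv P * Q - P * pderiv Q = g ^ p * (f * g ^ (p + 3) - W * M)"
    unfolding dP dQ unfolding P_def Q_def W_def M_def
    by (simp add: power_add algebra_simps numeral_eq_Suc)
  hence "f * g ^ (p + 3) = W * M" using W0 g0 by simp
  obtain u0 w0 where uw: "u0 * f + w0 * g = 1" using bezout_field_poly[OF fg(3)] by blast
  obtain u1 w1 where uw1: "u1 * f ^ (p + 2) + w1 * g = 1" using bezout_pow[OF uw] by blast
  have "u1 * M + (w1 - u1 * s * g ^ (p + 1)) * g = 1"
    using uw1 unfolding M_def by (simp add: power_add algebra_simps numeral_eq_Suc)
  then obtain u2 w2 where uw2: "u2 * g ^ (p + 3) + w2 * M = 1"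
    using bezout_pow[of "w1 - u1 * s * g ^ (p + 1)" g u1 M "p + 3"] by (auto simp: algebra_simps)
  have "f = f * (u2 * g ^ (p + 3) + w2 * M)" using uw2 by simp
  also have "\<dots> = u2 * (f * g ^ (p + 3)) + f * w2 * M" by (simp add: algebra_simps)
  also have "\<dots> = (u2 * W + f * w2) * M" using \<open>f * g ^ (p + 3) = W * M\<close> by (simp add: algebra_simps)
  finally have "M dvd f" by (metis dvd_triv_right)
  hence degM: "degree M \<le> degree f" using f0 by (simp add: dvd_imp_degree_le)
  have "degree M = max (degree (s * g ^ (p + 2))) (degree (f ^ (p + 2)))"
  proof (cases "degree (s * g ^ (p + 2)) < degree (f ^ (p + 2))")
    case True thus ?thesis unfolding M_def by (simp add: degree_add_eq_right)
  next
    case False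
    moreover have "degree (f ^ (p + 2)) = (p + 2) * degree f" by (rule degree_power_eq[OF f0])
    ultimately have "degree (f ^ (p + 2)) < degree (s * g ^ (p + 2))"
      using degs[of f] by simp
    thus ?thesis unfolding M_def by (simp add: degree_add_eq_left)
  qed
  moreover have "degree (s * g ^ (p + 2)) \<ge> 1" using g0 by (simp add: s_def degree_mult_eq degree_power_eq)
  moreover have "degree (f ^ (p + 2)) = (p + 2) * degree f" by (rule degree_power_eq[OF f0])
  ultimately show False using degM
    by (cases "degree f = 0") auto
qed




lemma degree_pderiv_le: "degree (pderiv p) \<le> degree p - 1"
  by (rule degree_le) (auto simp: coeff_pderiv coeff_eq_0)

lemma pderiv_nz_deg: "pderiv p \<noteq> 0 \<Longrightarrow> degree (pderiv p) < degree p"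
proof -
  assume h: "pderiv p \<noteq> 0"
  have "degree p \<noteq> 0"
  proof
    assume "degree p = 0"
    then obtain c where "p = [:c:]" by (elim degree_eq_zeroE)
    thus False using h by (simp add: pderiv_pCons)
  qed
  thus ?thesis using degree_pderiv_le[of p] by simp
qed

lemma rhom_poly_commute:
  assumes phi: "rhom \<phi>" and h: "rhom h"
  shows "\<phi> (poly (map_poly h r) x) = poly (map_poly (\<lambda>c. \<phi> (h c)) r) (\<phi> x)"
proof (induction r)
  case 0 then show ?case by (simp add: rhom_0[OF phi])
next
  case (pCons c r)
  have d0: "\<phi> (h 0) = 0" by (simp add: rhom_0[OF phi] rhom_0[OF h])
  show ?case using pCons map_poly_pCons[where f="\<lambda>c. \<phi> (h c)", OF d0, of c r]
    by (simp add: map_poly_pCons rhom_0[OF h] rhom_add[OF phi] rhom_mult[OF phi])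
qed

lemma map_poly_zero_fun: "map_poly (\<lambda>c. 0) r = 0"
  by (intro poly_eqI) (simp add: coeff_map_poly)

section \<open>p-th roots of polynomials\<close>

lemma root_poly:
  fixes R :: "'b::comm_ring_1 poly"
  assumes pr: "prime p" and ch: "of_nat p = (0::'b)"
    and z: "\<And>n. \<not> p dvd n \<Longrightarrow> coeff R n = 0"
    and rt: "\<And>i. \<rho> (coeff R (p * i)) ^ p = coeff R (p * i)"
  shows "(\<Sum>i\<le>degree R. monom (\<rho> (coeff R (p * i))) i) ^ p = R"
proof -
  have chp: "of_nat p = (0::'b poly)" using ch by (simp add: of_nat_poly)
  have p0: "p > 0" using pr prime_gt_0_nat by blast
  have "(\<Sum>i\<le>degree R. monom (\<rho> (coeff R (p * i))) i) ^ p = (\<Sum>i\<le>degree R. monom (\<rho> (coeff R (p * i))) i ^ p)"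
    by (rule frob_sum[OF pr chp])
  also have "\<dots> = (\<Sum>i\<le>degree R. monom (coeff R (p * i)) (p * i))"
    by (intro sum.cong refl) (simp add: monom_power rt[unfolded mult.commute[of p]] mult.commute)
  also have "\<dots> = R"
  proof (rule poly_eqI)
    fix n
    have "coeff (\<Sum>i\<le>degree R. monom (coeff R (p * i)) (p * i)) n = (\<Sum>i\<le>degree R. if p * i = n then coeff R (p * i) else 0)"
      by (simp add: coeff_sum coeff_monom)
    also have "\<dots> = coeff R n"
    proof (cases "p dvd n")
      case True
      then obtain k where k: "n = p * k" by blast
      have "(\<Sum>i\<le>degree R. if p * i = n then coeff R (p * i) else 0) = (\<Sum>i\<le>degree R. if i = k then coeff R n else 0)"
        using p0 k by (intro sum.cong refl) auto
      also have "\<dots> = (if k \<le> degree R then coeff R n else 0)" by simp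
      also have "\<dots> = coeff R n"
      proof (cases "k \<le> degree R")
        case False
        have "k \<le> p * k" using p0 by simp
        hence "n > degree R" using k False by linarith
        thus ?thesis using False by (simp add: coeff_eq_0)
      qed simp
      finally show ?thesis .
    next
      case False
      hence "(\<Sum>i\<le>degree R. if p * i = n then coeff R (p * i) else 0) = (\<Sum>i\<le>degree R. 0)"
        by (intro sum.cong refl) auto
      thus ?thesis using z[OF False] by simp
    qed
    finally show "coeff (\<Sum>i\<le>degree R. monom (coeff R (p * i)) (p * i)) n = coeff R n" .
  qed
  finally show ?thesis .
qed

lemma pderiv0_coeff:
  fixes r :: "'b::idom poly"
  assumes "pderiv r = 0" "CHAR('b) = p" "\<not> p dvd n"
  shows "coeff r n = 0"
proof (cases n)
  case 0 then show ?thesis using assms(3) by simp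
next
  case (Suc m)
  have "of_nat (Suc m) * coeff r (Suc m) = coeff (pderiv r) m" by (simp only: coeff_pderiv)
  also have "\<dots> = 0" using assms(1) by simp
  finally have "of_nat (Suc m) * coeff r (Suc m) = 0" .
  moreover have "of_nat (Suc m) \<noteq> (0::'b)" using assms(2,3) Suc by (simp only: of_nat_eq_0_iff_char_dvd) simp
  ultimately show ?thesis using Suc by simp
qed

lemma root1:
  fixes r :: "'a::alg_closed_field poly"
  assumes ch: "CHAR('a) = p" "p > 0" and d: "pderiv r = 0"
  shows "\<exists>q. q ^ p = r"
proof -
  note cf = char_facts[OF ch]
  define \<rho> where "\<rho> = (\<lambda>c::'a. SOME y. y ^ p = c)"
  have rt: "\<rho> c ^ p = c" for c unfolding \<rho>_def by (rule someI_ex) (rule nth_root_exists[OF ch(2)])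
  have "(\<Sum>i\<le>degree r. monom (\<rho> (coeff r (p * i))) i) ^ p = r"
    by (rule root_poly[OF cf(1) cf(2)]) (auto intro: pderiv0_coeff[OF d ch(1)] simp: rt)
  thus ?thesis by blast
qed

lemma root2:
  fixes R :: "'a::alg_closed_field poly poly"
  assumes ch: "CHAR('a) = p" "p > 0" and d1: "pderiv R = 0" and d2: "map_poly pderiv R = 0"
  shows "\<exists>Q. Q ^ p = R"
proof -
  note cf = char_facts[OF ch]
  define \<rho> where "\<rho> = (\<lambda>c::'a poly. SOME y. y ^ p = c)"
  have rt: "\<rho> (coeff R i) ^ p = coeff R i" for i unfolding \<rho>_def
  proof (rule someI_ex, rule root1[OF ch])
    show "pderiv (coeff R i) = 0" using arg_cong[OF d2, of "\<lambda>q. coeff q i"] by (simp add: coeff_map_poly)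
  qed
  have ch2: "CHAR('a poly) = p" using ch by simp
  have "(\<Sum>i\<le>degree R. monom (\<rho> (coeff R (p * i))) i) ^ p = R"
    by (rule root_poly[OF cf(1) cf(3)]) (auto intro: pderiv0_coeff[OF d1 ch2] simp: rt)
  thus ?thesis by blast
qed




lemma rhom_polyC: "rhom (polyC :: 'a::field \<Rightarrow> _)"
  unfolding rhom_def polyC_def by (simp add: one_pCons)

lemma rhom_iota: "rhom (\<lambda>c::'a::field. to_fract (polyC c))"
  using rhom_comp[OF rhom_polyC rhom_to_fract] by (simp add: comp_def)

lemma F_coeff1:
  fixes F :: "'a::field poly poly"
  assumes F: "F = (polyX ^ p + polyY ^ (p + 1)) * polyY"
  shows "coeff F 1 = [:0, 1:] ^ p" "degree F > 0" "coeff F 0 = 0"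
proof -
  have F': "F = pCons 0 (polyX ^ p + polyY ^ (p + 1))" unfolding F by (simp add: polyY_def)
  show c1: "coeff F 1 = [:0, 1:] ^ p" unfolding F' by (simp add: coeff_0_power polyX_def polyY_def)
  hence "coeff F 1 \<noteq> 0" by simp
  hence "1 \<le> degree F" by (rule le_degree)
  thus "degree F > 0" by simp
  show "coeff F 0 = 0" unfolding F' by simp
qed

lemma evS_inj:
  fixes F :: "'a::field poly poly"
  assumes dF: "degree F > 0"
    and z: "poly (map_poly (\<lambda>c. to_fract (polyC c)) r) (to_fract F) = 0"
  shows "r = 0"
proof -
  have "poly (map_poly (\<lambda>c. to_fract (polyC c)) r) (to_fract F) = to_fract (poly (map_poly polyC r) F)"
    using rhom_poly_commute[OF rhom_to_fract rhom_polyC, of r F] by simp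
  hence "poly (map_poly polyC r) F = 0" using z by simp
  moreover have "map_poly polyC r = map_poly (\<lambda>x. [:x:]) (map_poly (\<lambda>c. [:c:]) r)"
  proof -
    have "polyC = (\<lambda>x::'a. [:[:x:]:])" by (rule ext) (simp add: polyC_def)
    thus ?thesis by (subst map_poly_map_poly) (auto simp: comp_def)
  qed
  ultimately have "pcompose (map_poly (\<lambda>c. [:c:]) r) F = 0" by (simp add: pcompose_altdef)
  hence m0: "map_poly (\<lambda>c. [:c:]) r = 0" using pcompose_eq_0 dF by blast
  show "r = 0"
  proof (rule poly_eqI)
    fix n show "coeff r n = coeff 0 n" using arg_cong[OF m0, of "\<lambda>q. coeff q n"] by (simp add: coeff_map_poly)
  qed
qed

lemma independence:
  fixes F :: "'a::alg_closed_field poly poly" and G :: "'a poly poly fract"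
  assumes ch: "CHAR('a) = p" "p > 0" and F: "F = (polyX ^ p + polyY ^ (p + 1)) * polyY"
    and gen: "kFrac {to_fract F, G} = UNIV"
    and evS_def: "evS = (\<lambda>r. poly (map_poly (\<lambda>c. to_fract (polyC c)) r) (to_fract F))"
    and ev_def: "ev = (\<lambda>R. poly (map_poly evS R) G)"
  shows "ev R = 0 \<Longrightarrow> R = 0"
proof -
  note cf = char_facts[OF ch]
  have p2: "p \<ge> 2" using cf(1) prime_ge_2_nat by blast
  have hS: "rhom evS" unfolding evS_def by (rule rhom_poly_eval[OF rhom_iota])
  have hev: "rhom ev" unfolding ev_def by (rule rhom_poly_eval[OF hS])
  define DX where "DX = fD (map_poly (pderiv :: 'a poly \<Rightarrow> _))"
  define DY where "DY = fD (pderiv :: 'a poly poly \<Rightarrow> _)"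
  have dDX: "is_der DX" unfolding DX_def by (rule is_der_fD[OF is_der_mpderiv])
  have dDY: "is_der DY" unfolding DY_def by (rule is_der_fD[OF is_der_pderiv])
  have DXc: "DX (to_fract (polyC c)) = 0" for c
    unfolding DX_def by (simp add: fD_to_fract[OF is_der_mpderiv] polyC_def map_poly_pCons pderiv_pCons)
  have DYc: "DY (to_fract (polyC c)) = 0" for c
    unfolding DY_def by (simp add: fD_to_fract[OF is_der_pderiv] polyC_def pderiv_pCons)
  have chain: "\<delta> (ev R) = ev (map_poly pderiv R) * \<delta> (to_fract F) + ev (pderiv R) * \<delta> G"
    if d: "is_der \<delta>" and dc: "\<And>c. \<delta> (to_fract (polyC c)) = 0" for \<delta> R
  proof -
    have inner: "\<delta> (evS c) = evS (pderiv c) * \<delta> (to_fract F)" for c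
      using chain_rule[OF d rhom_iota, of c "to_fract F"] by (simp add: dc map_poly_zero_fun evS_def)
    have "\<delta> (ev R) = poly (map_poly (\<lambda>c. \<delta> (evS c)) R) G + ev (pderiv R) * \<delta> G"
      unfolding ev_def by (rule chain_rule[OF d hS])
    also have "poly (map_poly (\<lambda>c. \<delta> (evS c)) R) G = poly (map_poly (\<lambda>c. evS (pderiv c) * \<delta> (to_fract F)) R) G"
      by (simp add: inner)
    also have "\<dots> = poly (map_poly (\<lambda>c. evS (pderiv c)) R) G * \<delta> (to_fract F)"
      by (rule poly_map_scale) (simp add: rhom_0[OF hS])
    also have "map_poly (\<lambda>c. evS (pderiv c)) R = map_poly evS (map_poly pderiv R)"
      by (subst map_poly_map_poly) (auto simp: rhom_0[OF hS] comp_def)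
    finally show ?thesis unfolding ev_def by simp
  qed
  have chp: "(of_nat p :: 'a poly poly) = 0" by (rule cf(4))
  obtain m where pm: "p = Suc m" using ch(2) by (metis Suc_pred)
  have dXX: "map_poly pderiv (polyX :: 'a poly poly) = 1"
    by (simp add: polyX_def map_poly_pCons pderiv_pCons one_pCons)
  have dXY: "map_poly pderiv (polyY :: 'a poly poly) = 0"
    by (simp add: polyY_def map_poly_pCons pderiv_pCons)
  have dXF: "map_poly pderiv F = 0"
  proof -
    have "map_poly pderiv (polyX ^ p :: 'a poly poly) = 0"
    proof -
      have "map_poly pderiv (polyX ^ Suc m :: 'a poly poly) = of_nat (Suc m) * polyX ^ m * map_poly pderiv polyX"
        by (rule der_power[OF is_der_mpderiv])
      also have "(of_nat (Suc m) :: 'a poly poly) = 0" using chp pm by simp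
      finally show ?thesis unfolding pm by simp
    qed
    moreover have "map_poly pderiv (polyY ^ (p + 1) :: 'a poly poly) = 0"
    proof -
      have "map_poly pderiv (polyY ^ Suc p :: 'a poly poly) = of_nat (Suc p) * polyY ^ p * map_poly pderiv polyY"
        by (rule der_power[OF is_der_mpderiv])
      also have "\<dots> = 0" by (simp only: dXY mult_zero_right)
      finally show ?thesis by simp
    qed
    ultimately show ?thesis unfolding F
      by (simp add: der_mult[OF is_der_mpderiv] der_add[OF is_der_mpderiv] dXY)
  qed
  have DXF: "DX (to_fract F) = 0" unfolding DX_def by (simp add: fD_to_fract[OF is_der_mpderiv] dXF)
  have dYF: "pderiv F \<noteq> 0"
  proof
    assume "pderiv F = 0"
    hence "coeff (pderiv F) 0 = 0" by simp
    thus False using F_coeff1[OF F] by (simp add: coeff_pderiv)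
  qed
  have DYF: "DY (to_fract F) \<noteq> 0" unfolding DY_def using dYF by (simp add: fD_to_fract[OF is_der_pderiv])
  have DXG: "DX G \<noteq> 0"
  proof
    assume DG: "DX G = 0"
    have "kFrac {to_fract F, G} \<subseteq> {h. DX h = 0}"
      unfolding DX_def
      by (rule kFrac_least[OF fD_kernel_subfield[OF is_der_mpderiv]])
         (use DXc DXF DG in \<open>auto simp: DX_def\<close>)
    hence "DX (to_fract polyX) = 0" using gen by auto
    moreover have "DX (to_fract polyX) = 1" unfolding DX_def by (simp add: fD_to_fract[OF is_der_mpderiv] dXX)
    ultimately show False by simp
  qed
  have dF: "degree F > 0" using F_coeff1[OF F] by simp
  define \<sigma> where "\<sigma> = (\<lambda>R::'a poly poly. \<Sum>j\<le>degree R. degree (coeff R j))"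
  have main: "\<And>R. degree R = n \<Longrightarrow> ev R = 0 \<Longrightarrow> R = 0" for n
  proof (induction n rule: less_induct)
    case (less n)
    note outerIH = less.IH
    have inner: "degree R = n \<Longrightarrow> \<sigma> R = m \<Longrightarrow> ev R = 0 \<Longrightarrow> R = 0" for m R
    proof (induction m arbitrary: R rule: less_induct)
      case (less m R)
      show "R = 0"
      proof (rule ccontr)
        assume R0: "R \<noteq> 0"
        show False
        proof (cases "n = 0")
          case True
          hence "degree R = 0" using less.prems(1) by simp
          then obtain r where r: "R = [:r:]" by (elim degree_eq_zeroE)
          have "evS r = 0" using less.prems(3) r by (simp add: ev_def map_poly_pCons rhom_0[OF hS])
          hence "r = 0" using evS_inj[OF dF] evS_def by simp
          thus False using R0 r by simp
        next
          case False
          have "ev (pderiv R) * DX G = 0"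
            using chain[OF dDX DXc, of R] less.prems(3) DXF der_0[OF dDX] by simp
          hence "ev (pderiv R) = 0" using DXG by simp
          moreover have "degree (pderiv R) < n" using degree_pderiv_le[of R] less.prems(1) False by simp
          ultimately have RT: "pderiv R = 0" using outerIH by blast
          have "ev (map_poly pderiv R) * DY (to_fract F) = 0"
            using chain[OF dDY DYc, of R] less.prems(3) RT der_0[OF dDY] by (simp add: rhom_0[OF hev])
          hence evRS: "ev (map_poly pderiv R) = 0" using DYF by simp
          have RS: "map_poly pderiv R = 0"
          proof (rule ccontr)
            assume nz: "map_poly pderiv R \<noteq> 0"
            have le: "degree (map_poly pderiv R) \<le> n" using map_poly_degree_leq less.prems(1) by metis
            show False
            proof (cases "degree (map_poly pderiv R) < n")
              case True thus False using outerIH evRS nz by blast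
            next
              case False
              hence eqn: "degree (map_poly pderiv R) = n" using le by simp
              have "\<sigma> (map_poly pderiv R) < \<sigma> R"
              proof -
                have "\<sigma> (map_poly pderiv R) = (\<Sum>j\<le>n. degree (pderiv (coeff R j)))"
                  unfolding \<sigma>_def eqn by (simp add: coeff_map_poly)
                also have "\<dots> < (\<Sum>j\<le>n. degree (coeff R j))"
                proof (rule sum_strict_mono_ex1)
                  show "finite {..n}" by simp
                  show "\<forall>j\<in>{..n}. degree (pderiv (coeff R j)) \<le> degree (coeff R j)"
                    using degree_pderiv_le by (metis diff_le_self le_trans)
                  obtain j where j: "coeff (map_poly pderiv R) j \<noteq> 0" using nz by (metis leading_coeff_0_iff)
                  hence "j \<le> n" using eqn le_degree by metis
                  moreover have "pderiv (coeff R j) \<noteq> 0" using j by (simp add: coeff_map_poly)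
                  ultimately show "\<exists>j\<in>{..n}. degree (pderiv (coeff R j)) < degree (coeff R j)"
                    using pderiv_nz_deg by blast
                qed
                also have "\<dots> = \<sigma> R" unfolding \<sigma>_def less.prems(1) ..
                finally show ?thesis .
              qed
              hence "map_poly pderiv R = 0" using less.IH less.prems(2) eqn evRS by blast
              thus False using nz by simp
            qed
          qed
          obtain Q where Q: "Q ^ p = R" using root2[OF ch RT RS] by blast
          have Q0: "Q \<noteq> 0" using Q R0 ch(2) by (auto simp: zero_power)
          have "degree R = p * degree Q" using Q degree_power_eq[OF Q0, of p] by simp
          hence dRQ: "degree R = p * degree Q" .
          have dQ: "degree Q \<noteq> 0" using dRQ False less.prems(1) by auto
          have "2 * degree Q \<le> p * degree Q" by (rule mult_le_mono1[OF p2])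
          hence "degree Q < n" using dQ dRQ less.prems(1) by linarith
          moreover have "ev Q = 0" using less.prems(3) Q rhom_power[OF hev, of Q p] by simp
          ultimately have "Q = 0" using outerIH by blast
          thus False using Q0 by simp
        qed
      qed
    qed
    show ?case using inner less.prems by blast
  qed
  show "ev R = 0 \<Longrightarrow> R = 0" using main by blast
qed




lemma alg_closed_infinite: "infinite (UNIV :: 'a::alg_closed_field set)"
proof
  assume fin: "finite (UNIV :: 'a set)"
  define P :: "'a poly" where "P = (\<Prod>a\<in>UNIV. [:-a, 1:])"
  have "degree P = (\<Sum>a\<in>(UNIV::'a set). degree [:-a, 1:])"
    unfolding P_def by (rule degree_prod_sum_eq) simp
  hence dP: "degree P = card (UNIV :: 'a set)" by simp
  have "card {0::'a, 1} \<le> card (UNIV :: 'a set)" using fin by (intro card_mono) auto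
  hence "card (UNIV :: 'a set) \<ge> 2" by simp
  hence dP2: "degree P > 0" using dP by simp
  hence "degree (P + 1) > 0" by (simp add: degree_add_eq_left)
  then obtain x where "poly (P + 1) x = 0" using alg_closed_imp_poly_has_root by blast
  moreover have "poly P x = 0" unfolding P_def poly_prod using fin
    by (intro prod_zero) (auto intro: bexI[of _ x])
  ultimately show False by simp
qed

lemma part4:
  fixes F :: "'a::alg_closed_field poly poly"
  assumes ch: "CHAR('a) = p" "p > 0" and F: "F = (polyX ^ p + polyY ^ (p + 1)) * polyY"
  shows "\<not> field_generator F"
proof
  assume "field_generator F"
  then obtain G where gen: "kFrac {to_fract F, G} = UNIV" unfolding field_generator_def by blast
  note cf = char_facts[OF ch]
  define evS where "evS = (\<lambda>r. poly (map_poly (\<lambda>c. to_fract (polyC c)) r) (to_fract F))"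
  define ev where "ev = (\<lambda>R. poly (map_poly evS R) G)"
  have hS: "rhom evS" unfolding evS_def by (rule rhom_poly_eval[OF rhom_iota])
  have hev: "rhom ev" unfolding ev_def by (rule rhom_poly_eval[OF hS])
  have indep: "ev R = 0 \<Longrightarrow> R = 0" for R
    by (rule independence[OF ch F gen evS_def ev_def])
  define Rep where "Rep = {x. \<exists>A B. ev B \<noteq> 0 \<and> x = ev A / ev B}"
  have inRep: "ev A \<in> Rep" for A
    unfolding Rep_def by (intro CollectI exI[of _ A] exI[of _ 1]) (simp add: rhom_1[OF hev])
  have subRep: "is_subfield Rep"
    unfolding is_subfield_def
  proof (intro conjI ballI)
    show "0 \<in> Rep" using inRep[of 0] by (simp add: rhom_0[OF hev])
    show "1 \<in> Rep" using inRep[of 1] by (simp add: rhom_1[OF hev])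
    fix x y assume x: "x \<in> Rep" and y: "y \<in> Rep"
    from x obtain A B where AB: "ev B \<noteq> 0" "x = ev A / ev B" unfolding Rep_def by blast
    from y obtain C D where CD: "ev D \<noteq> 0" "y = ev C / ev D" unfolding Rep_def by blast
    have BD: "ev (B * D) \<noteq> 0" using AB CD by (simp add: rhom_mult[OF hev])
    have "x + y = ev (A * D + C * B) / ev (B * D)"
      unfolding AB(2) CD(2) using AB(1) CD(1) by (simp add: rhom_mult[OF hev] rhom_add[OF hev] field_simps)
    thus "x + y \<in> Rep" using BD unfolding Rep_def by blast
    have "x - y = ev (A * D - C * B) / ev (B * D)"
      unfolding AB(2) CD(2) using AB(1) CD(1) by (simp add: rhom_mult[OF hev] rhom_diff[OF hev] field_simps)
    thus "x - y \<in> Rep" using BD unfolding Rep_def by blast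
    have "x * y = ev (A * C) / ev (B * D)"
      unfolding AB(2) CD(2) by (simp add: rhom_mult[OF hev])
    thus "x * y \<in> Rep" using BD unfolding Rep_def by blast
  next
    fix x assume x: "x \<in> Rep"
    from x obtain A B where AB: "ev B \<noteq> 0" "x = ev A / ev B" unfolding Rep_def by blast
    show "inverse x \<in> Rep"
    proof (cases "ev A = 0")
      case True thus ?thesis using AB inRep[of 0] by (simp add: rhom_0[OF hev])
    next
      case False
      hence "inverse x = ev B / ev A" using AB by simp
      thus ?thesis using False unfolding Rep_def by blast
    qed
  qed
  have iS: "\<And>c. evS [:c:] = to_fract (polyC c)"
    by (simp add: evS_def map_poly_pCons polyC_def)
  have ec: "ev [:[:c:]:] = to_fract (polyC c)" for c
    unfolding ev_def by (simp add: map_poly_pCons rhom_0[OF hS] iS)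
  have one: "to_fract [:[:1::'a:]:] = (1 :: 'a poly poly fract)" by (metis one_pCons to_fract_1)
  have eS: "ev [:[:0, 1:]:] = to_fract F"
    unfolding ev_def by (simp add: map_poly_pCons rhom_0[OF hS] evS_def polyC_def one)
  have eG: "ev [:0, 1:] = G"
    unfolding ev_def by (simp add: map_poly_pCons rhom_0[OF hS] rhom_1[OF hS])
  have "kFrac {to_fract F, G} \<subseteq> Rep"
  proof (rule kFrac_least[OF subRep])
    show "to_fract (polyC c) \<in> Rep" for c using inRep[of "[:[:c:]:]"] ec by simp
    show "{to_fract F, G} \<subseteq> Rep" using inRep[of "[:[:0, 1:]:]"] inRep[of "[:0, 1:]"] eS eG by simp
  qed
  hence all: "x \<in> Rep" for x using gen by auto
  obtain A1 B1 where AB1: "ev B1 \<noteq> 0" "to_fract polyX = ev A1 / ev B1"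
    using all[of "to_fract polyX"] unfolding Rep_def by blast
  obtain A2 B2 where AB2: "ev B2 \<noteq> 0" "to_fract polyY = ev A2 / ev B2"
    using all[of "to_fract polyY"] unfolding Rep_def by blast
  define S :: "'a poly poly" where "S = [:[:0, 1:]:]"
  define R where "R = A2 * A1 ^ p * B2 ^ (p + 1) + A2 ^ (p + 2) * B1 ^ p - S * B1 ^ p * B2 ^ (p + 2)"
  have "ev R = 0"
  proof -
    define a1 where "a1 = ev A1"
    define a2 where "a2 = ev A2"
    define b1 where "b1 = ev B1"
    define b2 where "b2 = ev B2"
    define x where "x = to_fract (polyX :: 'a poly poly)"
    define y where "y = to_fract (polyY :: 'a poly poly)"
    have xb: "x * b1 = a1" using AB1 unfolding x_def a1_def b1_def by simp
    have yb: "y * b2 = a2" using AB2 unfolding y_def a2_def b2_def by simp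
    have FF: "to_fract F = (x ^ p + y ^ (p + 1)) * y" unfolding F x_def y_def by (simp add: to_fract_power)
    have "ev R = a2 * a1 ^ p * b2 ^ (p + 1) + a2 ^ (p + 2) * b1 ^ p - to_fract F * b1 ^ p * b2 ^ (p + 2)"
      unfolding R_def a1_def a2_def b1_def b2_def
      by (simp add: rhom_add[OF hev] rhom_diff[OF hev] rhom_mult[OF hev] rhom_power[OF hev] eS[folded S_def])
    also have "to_fract F * b1 ^ p * b2 ^ (p + 2) = (x * b1) ^ p * (y * b2) * b2 ^ (p + 1) + (y * b2) ^ (p + 1) * (y * b2) * b1 ^ p"
      unfolding FF by (simp add: power_mult_distrib power_add algebra_simps)
    also have "\<dots> = a1 ^ p * a2 * b2 ^ (p + 1) + a2 ^ (p + 1) * a2 * b1 ^ p" by (simp add: xb yb)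
    finally show ?thesis by (simp add: algebra_simps power_add)
  qed
  hence R0: "R = 0" by (rule indep)
  have B10: "B1 \<noteq> 0" using AB1(1) rhom_0[OF hev] by auto
  have B20: "B2 \<noteq> 0" using AB2(1) rhom_0[OF hev] by auto
  have finB: "finite {t. poly B [:t:] = 0}" if "B \<noteq> 0" for B :: "'a poly poly"
  proof -
    have "{t. poly B [:t:] = 0} \<subseteq> (\<lambda>q. coeff q 0) ` {q. poly B q = 0}" by force
    moreover have "finite {q. poly B q = 0}" by (rule poly_roots_finite[OF that])
    ultimately show ?thesis by (meson finite_imageI finite_subset)
  qed
  have "finite ({t. poly B1 [:t:] = 0} \<union> {t. poly B2 [:t:] = 0})" using finB B10 B20 by simp
  then obtain t where t: "t \<notin> {t. poly B1 [:t:] = 0} \<union> {t. poly B2 [:t:] = 0}"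
    using alg_closed_infinite by (metis ex_new_if_finite)
  have hsp: "rhom (\<lambda>R. poly R [:t:])" by (rule rhom_poly_at)
  have "poly R [:t:] = 0" using R0 by simp
  hence "poly A2 [:t:] * poly A1 [:t:] ^ p * poly B2 [:t:] ^ (p + 1) + poly A2 [:t:] ^ (p + 2) * poly B1 [:t:] ^ p
      = [:0, 1:] * poly B1 [:t:] ^ p * poly B2 [:t:] ^ (p + 2)"
    unfolding R_def S_def by (simp add: poly_power)
  moreover have "poly B1 [:t:] \<noteq> 0" "poly B2 [:t:] \<noteq> 0" using t by auto
  ultimately show False using nosol[OF cf(1) cf(2)] by blast
qed




lemma card_roots_sep:
  fixes \<psi> :: "'a::alg_closed_field poly"
  assumes "\<psi> \<noteq> 0" "\<And>x. poly \<psi> x = 0 \<Longrightarrow> poly (pderiv \<psi>) x \<noteq> 0"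
  shows "card {x. poly \<psi> x = 0} = degree \<psi>"
  using assms
proof (induction "degree \<psi>" arbitrary: \<psi> rule: less_induct)
  case (less \<psi>)
  show ?case
  proof (cases "degree \<psi> = 0")
    case True
    then obtain a where a: "\<psi> = [:a:]" by (elim degree_eq_zeroE)
    hence "a \<noteq> 0" using less.prems by simp
    hence "{x. poly \<psi> x = 0} = {}" using a by simp
    thus ?thesis using True by simp
  next
    case False
    then obtain x where x: "poly \<psi> x = 0" using alg_closed_imp_poly_has_root by blast
    hence "[:-x, 1:] dvd \<psi>" by (subst (asm) poly_eq_0_iff_dvd)
    then obtain q where q: "\<psi> = [:-x, 1:] * q" by (elim dvdE)
    have q0: "q \<noteq> 0" using q less.prems by auto
    have dq: "degree \<psi> = Suc (degree q)" unfolding q using q0 by (subst degree_mult_eq) auto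
    have dpsi: "pderiv \<psi> = q + [:-x, 1:] * pderiv q" unfolding q by (simp add: pderiv_mult pderiv_pCons pderiv_diff pderiv_smult)
    have qx: "poly q x \<noteq> 0" using less.prems(2)[OF x] dpsi by simp
    have hq: "poly (pderiv q) y \<noteq> 0" if "poly q y = 0" for y
    proof -
      have "poly \<psi> y = 0" using that q by simp
      hence "poly (pderiv \<psi>) y \<noteq> 0" by (rule less.prems(2))
      thus ?thesis using that dpsi by auto
    qed
    have IH: "card {y. poly q y = 0} = degree q"
      using less.hyps[of q] dq q0 hq by simp
    have "{y. poly \<psi> y = 0} = insert x {y. poly q y = 0}" unfolding q by auto
    moreover have "x \<notin> {y. poly q y = 0}" using qx by simp
    moreover have "finite {y. poly q y = 0}" by (rule poly_roots_finite[OF q0])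
    ultimately show ?thesis using IH dq by simp
  qed
qed

definition badset :: "nat \<Rightarrow> 'a::field \<Rightarrow> 'a set" where
  "badset p \<gamma> = (\<lambda>x. - 2 * x ^ (p + 1)) ` {x. poly (monom 1 (p + 2) + [:\<gamma>:]) x = 0}"

lemma finite_badset: "finite (badset p \<gamma>)"
proof -
  have "monom 1 (p + 2) + [:\<gamma>:] \<noteq> (0 :: 'a poly)"
  proof
    assume "monom 1 (p + 2) + [:\<gamma>:] = (0 :: 'a poly)"
    hence "coeff (monom 1 (p + 2) + [:\<gamma>:]) (p + 2) = 0" by simp
    thus False by (simp add: coeff_monom)
  qed
  thus ?thesis unfolding badset_def by (intro finite_imageI poly_roots_finite)
qed

lemma many_roots:
  fixes \<gamma> u0 :: "'a::alg_closed_field"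
  assumes ch: "of_nat p = (0::'a)" and g0: "\<gamma> \<noteq> 0" and u0: "u0 \<notin> badset p \<gamma>"
  shows "card {x. x ^ (p + 2) + u0 * x - \<gamma> = 0} = p + 2"
proof -
  define \<psi> :: "'a poly" where "\<psi> = monom 1 (p + 2) + [:-\<gamma>, u0:]"
  have ev: "poly \<psi> x = x ^ (p + 2) + u0 * x - \<gamma>" for x
    by (simp add: \<psi>_def poly_monom algebra_simps)
  have dpsi: "poly (pderiv \<psi>) x = 2 * x ^ (p + 1) + u0" for x
  proof -
    have "(of_nat (p + 2) :: 'a) = 2" using ch by simp
    thus ?thesis by (simp add: \<psi>_def pderiv_add pderiv_monom pderiv_pCons poly_monom)
  qed
  have deg: "degree \<psi> = p + 2"
    unfolding \<psi>_def by (subst degree_add_eq_left) (auto simp: degree_monom_eq)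
  have nz: "\<psi> \<noteq> 0" using deg by auto
  have sep: "poly (pderiv \<psi>) x \<noteq> 0" if "poly \<psi> x = 0" for x
  proof
    assume d: "poly (pderiv \<psi>) x = 0"
    have e1: "x ^ (p + 2) + u0 * x - \<gamma> = 0" using that ev by simp
    have e2: "2 * x ^ (p + 1) + u0 = 0" using d dpsi by simp
    have "x * (2 * x ^ (p + 1) + u0) = 0" using e2 by simp
    hence "2 * x ^ (p + 2) + u0 * x = 0" by (simp add: algebra_simps)
    hence e3: "2 * x ^ (p + 2) + u0 * x = 0" .
    have "x ^ (p + 2) + \<gamma> = (2 * x ^ (p + 2) + u0 * x) - (x ^ (p + 2) + u0 * x - \<gamma>)"
      by algebra
    also have "\<dots> = 0 - 0" by (simp only: e1 e3)
    finally have xr: "x ^ (p + 2) + \<gamma> = 0" by simp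
    have "u0 = - 2 * x ^ (p + 1)" using e2 by (simp add: algebra_simps eq_neg_iff_add_eq_0)
    moreover have "poly (monom 1 (p + 2) + [:\<gamma>:]) x = 0" using xr by (simp add: poly_monom)
    ultimately have "u0 \<in> badset p \<gamma>" unfolding badset_def by blast
    thus False using u0 by simp
  qed
  have "card {x. poly \<psi> x = 0} = p + 2" using card_roots_sep[OF nz sep] deg by simp
  thus ?thesis by (simp add: ev)
qed

lemma vanish_r:
  fixes r :: "'a::alg_closed_field poly poly" and \<gamma> :: 'a
  assumes pr: "prime p" and ch: "of_nat p = (0::'a)" and g0: "\<gamma> \<noteq> 0"
    and dr: "degree r < p + 2"
    and z: "\<And>\<tau>. \<tau> \<noteq> 0 \<Longrightarrow> poly (map_poly (\<lambda>c. poly c ((\<gamma> - \<tau> ^ (p + 2)) / \<tau>)) r) (\<tau> ^ p) = 0"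
  shows "r = 0"
proof -
  have zero_at: "poly (coeff r j) u0 = 0" if u0: "u0 \<notin> badset p \<gamma>" for u0 j
  proof -
    define T where "T = {x. x ^ (p + 2) + u0 * x - \<gamma> = 0}"
    have cT: "card T = p + 2" unfolding T_def by (rule many_roots[OF ch g0 u0])
    have fT: "finite T" using cT by (metis card.infinite add_is_0 zero_neq_numeral)
    define \<Lambda> where "\<Lambda> = map_poly (\<lambda>c. poly c u0) r"
    have inj: "inj_on (\<lambda>x. x ^ p) T" by (intro inj_onI) (rule frob_inj[OF pr ch])
    have cT': "card ((\<lambda>x. x ^ p) ` T) = p + 2" using card_image[OF inj] cT by simp
    have "\<Lambda> = 0"
    proof (rule poly_eqI_degree[of "(\<lambda>x. x ^ p) ` T"])
      fix y assume "y \<in> (\<lambda>x. x ^ p) ` T"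
      then obtain \<tau> where \<tau>: "\<tau> \<in> T" "y = \<tau> ^ p" by blast
      have t0: "\<tau> \<noteq> 0" using \<tau>(1) g0 unfolding T_def by auto
      have "u0 = (\<gamma> - \<tau> ^ (p + 2)) / \<tau>" using \<tau>(1) t0 unfolding T_def by (simp add: field_simps)
      thus "poly \<Lambda> y = poly 0 y" using z[OF t0] \<tau>(2) unfolding \<Lambda>_def by simp
    next
      show "degree \<Lambda> < card ((\<lambda>x. x ^ p) ` T)" unfolding cT' \<Lambda>_def
        using map_poly_degree_leq[of "\<lambda>c. poly c u0" r] dr by linarith
    qed (simp add: cT')
    hence "coeff \<Lambda> j = 0" by simp
    thus ?thesis unfolding \<Lambda>_def by (simp add: coeff_map_poly)
  qed
  show ?thesis
  proof (rule poly_eqI)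
    fix j
    show "coeff r j = coeff 0 j"
    proof (rule ccontr)
      assume "coeff r j \<noteq> coeff 0 j"
      hence nz: "coeff r j \<noteq> 0" by simp
      have "UNIV - badset p \<gamma> \<subseteq> {x. poly (coeff r j) x = 0}" using zero_at by blast
      moreover have "infinite (UNIV - badset p \<gamma>)"
        using alg_closed_infinite finite_badset by (metis Diff_infinite_finite)
      ultimately have "infinite {x. poly (coeff r j) x = 0}" using finite_subset by blast
      thus False using poly_roots_finite[OF nz] by simp
    qed
  qed
qed




primrec abseq :: "'b::field \<Rightarrow> 'b \<Rightarrow> 'b \<Rightarrow> nat \<Rightarrow> 'b \<times> 'b" where
  "abseq g u v 0 = (1, 0)"
| "abseq g u v (Suc n) = (snd (abseq g u v n) * g / v, fst (abseq g u v n) - snd (abseq g u v n) * u / v)"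

lemma abseq_pow:
  fixes z :: "'b::field"
  assumes v: "v \<noteq> 0" and z: "v * z ^ 2 + u * z = g"
  shows "z ^ n = fst (abseq g u v n) + snd (abseq g u v n) * z"
proof (induction n)
  case 0 then show ?case by simp
next
  case (Suc n)
  define a where "a = fst (abseq g u v n)"
  define b where "b = snd (abseq g u v n)"
  have z2: "z ^ 2 = (g - u * z) / v" using z v by (simp add: field_simps)
  have "z ^ Suc n = a * z + b * z ^ 2" using Suc by (simp add: a_def b_def algebra_simps power2_eq_square)
  also have "\<dots> = b * g / v + (a - b * u / v) * z" unfolding z2 using v by (simp add: field_simps)
  finally show ?case by (simp add: a_def b_def)
qed

lemma abseq_in:
  assumes K: "is_subfield K" and "g \<in> K" "u \<in> K" "v \<in> K"
  shows "fst (abseq g u v n) \<in> K \<and> snd (abseq g u v n) \<in> K"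
  by (induction n) (simp_all add: assms subfield_0 subfield_1 subfield_mult subfield_divide subfield_diff)

lemma part3_one:
  fixes F :: "'a::alg_closed_field poly poly"
  assumes ch: "CHAR('a) = p" "p > 0" and F: "F = (polyX ^ p + polyY ^ (p + 1)) * polyY"
    and c0: "c \<noteq> 0"
  shows "irreducible (F - polyC c) \<and> rational_quotient (F - polyC c)"
proof -
  note cf = char_facts[OF ch]
  obtain \<gamma> where g: "\<gamma> ^ p = c" using nth_root_exists[OF ch(2)] by blast
  have g0: "\<gamma> \<noteq> 0" using g c0 ch(2) by (auto simp: zero_power)
  define \<kappa> where "\<kappa> = (\<lambda>a::'a. to_fract [:a:])"
  have hk: "rhom \<kappa>" unfolding \<kappa>_def using rhom_comp[OF rhom_const_poly rhom_to_fract] by (simp add: comp_def)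
  define t :: "'a poly fract" where "t = to_fract [:0, 1:]"
  have t0: "t \<noteq> 0" by (simp add: t_def)
  define u where "u = \<kappa> \<gamma> / t - t ^ (p + 1)"
  define v where "v = t ^ p"
  have v0: "v \<noteq> 0" using t0 by (simp add: v_def)
  define hX where "hX = (\<lambda>cx. poly (map_poly \<kappa> cx) u)"
  have hhX: "rhom hX" unfolding hX_def by (rule rhom_poly_eval[OF hk])
  define evK where "evK = (\<lambda>P. poly (map_poly hX P) v)"
  have hev: "rhom evK" unfolding evK_def by (rule rhom_poly_eval[OF hhX])
  have evK_eq: "eval_kt P u v = evK P" for P
    unfolding eval_kt_def evK_def hX_def \<kappa>_def ..
  have k0: "\<kappa> 0 = 0" by (rule rhom_0[OF hk])
  have h0: "hX 0 = 0" by (rule rhom_0[OF hhX])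
  have eC: "evK (polyC a) = \<kappa> a" for a
    by (simp add: evK_def hX_def polyC_def map_poly_pCons k0 h0)
  have eX: "evK polyX = u"
    by (simp add: evK_def hX_def polyX_def map_poly_pCons k0 h0 rhom_1[OF hk])
  have eY: "evK polyY = v"
    by (simp add: evK_def polyY_def map_poly_pCons h0 rhom_1[OF hhX])
  define w where "w = (\<lambda>\<tau>::'a. (\<gamma> - \<tau> ^ (p + 2)) / \<tau>)"
  define ev2 where "ev2 = (\<lambda>\<tau> (P::'a poly poly). poly (map_poly (\<lambda>c. poly c (w \<tau>)) P) (\<tau> ^ p))"
  have hev2: "rhom (ev2 \<tau>)" for \<tau> unfolding ev2_def by (rule rhom_poly_eval[OF rhom_poly_at])
  define T :: "'a poly" where "T = [:0, 1:]"
  have tT: "to_fract (T ^ n) = t ^ n" for n by (simp add: T_def t_def to_fract_power)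
  have tT1: "to_fract T = t" by (simp add: T_def t_def)
  have pT: "poly T \<tau> = \<tau>" for \<tau> by (simp add: T_def)
  have e2C: "ev2 \<tau> (polyC a) = a" for \<tau> a by (simp add: ev2_def polyC_def map_poly_pCons)
  have e2X: "ev2 \<tau> polyX = w \<tau>" for \<tau> by (simp add: ev2_def polyX_def map_poly_pCons)
  have e2Y: "ev2 \<tau> polyY = \<tau> ^ p" for \<tau> by (simp add: ev2_def polyY_def map_poly_pCons)
  have clear: "\<exists>N \<Psi>. to_fract \<Psi> = evK P * t ^ N \<and> (\<forall>\<tau>. \<tau> \<noteq> 0 \<longrightarrow> poly \<Psi> \<tau> = \<tau> ^ N * ev2 \<tau> P)" for P
  proof (induction P rule: polyXY_induct)
    case (C a)
    show ?case
      by (intro exI[of _ 0] exI[of _ "[:a:]"])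
         (simp add: eC \<kappa>_def e2C)
  next
    case X
    have "to_fract ([:\<gamma>:] - T ^ (p + 2)) = evK polyX * t ^ 1"
      unfolding eX u_def using t0 by (simp add: tT tT1 \<kappa>_def field_simps power_add)
    moreover have "poly ([:\<gamma>:] - T ^ (p + 2)) \<tau> = \<tau> ^ 1 * ev2 \<tau> polyX" if "\<tau> \<noteq> 0" for \<tau>
      using that by (simp add: e2X w_def pT poly_power field_simps)
    ultimately show ?case by blast
  next
    case Y
    show ?case
      by (intro exI[of _ 0] exI[of _ "T ^ p"])
         (simp add: eY v_def tT e2Y pT poly_power)
  next
    case (add a b)
    then obtain N1 \<Psi>1 N2 \<Psi>2 where 1: "to_fract \<Psi>1 = evK a * t ^ N1" "\<forall>\<tau>. \<tau> \<noteq> 0 \<longrightarrow> poly \<Psi>1 \<tau> = \<tau> ^ N1 * ev2 \<tau> a"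
      and 2: "to_fract \<Psi>2 = evK b * t ^ N2" "\<forall>\<tau>. \<tau> \<noteq> 0 \<longrightarrow> poly \<Psi>2 \<tau> = \<tau> ^ N2 * ev2 \<tau> b" by blast
    have "to_fract (\<Psi>1 * T ^ N2 + \<Psi>2 * T ^ N1) = evK (a + b) * t ^ (N1 + N2)"
      using 1 2 by (simp add: tT rhom_add[OF hev] power_add algebra_simps)
    moreover have "poly (\<Psi>1 * T ^ N2 + \<Psi>2 * T ^ N1) \<tau> = \<tau> ^ (N1 + N2) * ev2 \<tau> (a + b)" if "\<tau> \<noteq> 0" for \<tau>
      using 1 2 that by (simp add: pT poly_power rhom_add[OF hev2] power_add algebra_simps)
    ultimately show ?case by blast
  next
    case (mult a b)
    then obtain N1 \<Psi>1 N2 \<Psi>2 where 1: "to_fract \<Psi>1 = evK a * t ^ N1" "\<forall>\<tau>. \<tau> \<noteq> 0 \<longrightarrow> poly \<Psi>1 \<tau> = \<tau> ^ N1 * ev2 \<tau> a"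
      and 2: "to_fract \<Psi>2 = evK b * t ^ N2" "\<forall>\<tau>. \<tau> \<noteq> 0 \<longrightarrow> poly \<Psi>2 \<tau> = \<tau> ^ N2 * ev2 \<tau> b" by blast
    have "to_fract (\<Psi>1 * \<Psi>2) = evK (a * b) * t ^ (N1 + N2)"
      using 1 2 by (simp add: rhom_mult[OF hev] power_add algebra_simps)
    moreover have "poly (\<Psi>1 * \<Psi>2) \<tau> = \<tau> ^ (N1 + N2) * ev2 \<tau> (a * b)" if "\<tau> \<noteq> 0" for \<tau>
      using 1 2 that by (simp add: rhom_mult[OF hev2] power_add algebra_simps)
    ultimately show ?case by blast
  qed
  have small0: "r = 0" if dr: "degree r < p + 2" and er: "evK r = 0" for r
  proof (rule vanish_r[OF cf(1) cf(2) g0 dr])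
    fix \<tau> :: 'a assume t0': "\<tau> \<noteq> 0"
    obtain N \<Psi> where NP: "to_fract \<Psi> = evK r * t ^ N" "\<forall>\<tau>. \<tau> \<noteq> 0 \<longrightarrow> poly \<Psi> \<tau> = \<tau> ^ N * ev2 \<tau> r"
      using clear[of r] by blast
    have "\<Psi> = 0" using NP(1) er by simp
    hence "\<tau> ^ N * ev2 \<tau> r = 0" using NP(2) t0' by simp
    hence "ev2 \<tau> r = 0" using t0' by simp
    thus "poly (map_poly (\<lambda>c. poly c ((\<gamma> - \<tau> ^ (p + 2)) / \<tau>)) r) (\<tau> ^ p) = 0"
      by (simp add: ev2_def w_def)
  qed
  define \<Phi> where "\<Phi> = F - polyC c"
  have \<Phi>_eq: "\<Phi> = monom 1 (p + 2) + [:- [:c:], [:0, 1:] ^ p:]"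
  proof -
    have cpow: "[:a:] ^ n = [:a ^ n:]" for a :: "'a poly" and n by (induction n) simp_all
    have xp: "(polyX :: 'a poly poly) ^ p = [:[:0, 1:] ^ p:]" unfolding polyX_def by (rule cpow)
    have "F = polyX ^ p * polyY + polyY ^ Suc (Suc p)"
      unfolding F by (simp add: distrib_right mult.assoc)
    also have "(polyX :: 'a poly poly) ^ p * polyY = [:0, [:0, 1:] ^ p:]" unfolding xp by (simp add: polyY_def)
    also have "(polyY :: 'a poly poly) ^ Suc (Suc p) = monom 1 (p + 2)" by (simp add: polyY_def monom_altdef)
    finally have "F = [:0, [:0, 1:] ^ p:] + monom 1 (p + 2)" .
    thus ?thesis unfolding \<Phi>_def polyC_def by simp
  qed
  have dP: "degree \<Phi> = p + 2" unfolding \<Phi>_eq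
    by (subst degree_add_eq_left) (auto simp: degree_monom_eq)
  have lP: "coeff \<Phi> (p + 2) = 1" unfolding \<Phi>_eq by (simp add: coeff_monom)
  have P0: "\<Phi> \<noteq> 0" using dP by auto
  have eF: "evK F = (u ^ p + v ^ (p + 1)) * v"
    unfolding F by (simp add: rhom_mult[OF hev] rhom_add[OF hev] rhom_power[OF hev] eX eY)
  have up: "u ^ p = \<kappa> c / t ^ p - t ^ ((p + 1) * p)"
  proof -
    have "u ^ p = (\<kappa> \<gamma> / t) ^ p - (t ^ (p + 1)) ^ p" unfolding u_def by (rule frob_diff[OF cf(1) cf(5)])
    also have "(\<kappa> \<gamma> / t) ^ p = \<kappa> c / t ^ p" using g by (simp add: power_divide rhom_power[OF hk, symmetric])
    also have "(t ^ (p + 1)) ^ p = t ^ ((p + 1) * p)" by (rule power_mult[symmetric])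
    finally show ?thesis .
  qed
  have eP: "evK \<Phi> = 0"
  proof -
    have "evK \<Phi> = (u ^ p + v ^ (p + 1)) * v - \<kappa> c" unfolding \<Phi>_def by (simp add: rhom_diff[OF hev] eF eC)
    also have "\<dots> = 0"
    proof -
      have hpp: "t ^ p * (t ^ p) ^ p = t ^ (p + p * p)" by (simp only: power_add power_mult)
      show ?thesis unfolding up v_def using t0 hpp by (simp add: field_simps)
    qed
    finally show ?thesis .
  qed
  have ker: "evK P = 0 \<longleftrightarrow> \<Phi> dvd P" for P
  proof
    assume e: "evK P = 0"
    obtain q r where qr: "pseudo_divmod P \<Phi> = (q, r)" by (cases "pseudo_divmod P \<Phi>") auto
    have eq: "P = \<Phi> * q + r" using pseudo_divmod(1)[OF P0 qr] lP dP by simp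
    have "r = 0 \<or> degree r < degree \<Phi>" by (rule pseudo_divmod(2)[OF P0 qr])
    moreover have "evK r = 0"
    proof -
      have "evK P = evK \<Phi> * evK q + evK r" using eq by (simp add: rhom_add[OF hev] rhom_mult[OF hev])
      thus ?thesis using e eP by simp
    qed
    ultimately have "r = 0" using small0 dP by auto
    thus "\<Phi> dvd P" using eq by simp
  next
    assume "\<Phi> dvd P"
    then obtain q where "P = \<Phi> * q" by blast
    thus "evK P = 0" by (simp add: rhom_mult[OF hev] eP)
  qed
  have irr: "irreducible \<Phi>"
  proof (rule irreducibleI)
    show "\<Phi> \<noteq> 0" by (rule P0)
    show "\<not> \<Phi> dvd 1"
    proof
      assume "\<Phi> dvd 1"
      then obtain w where "1 = \<Phi> * w" by blast
      hence "degree (\<Phi> * w) = 0" by (metis degree_1)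
      moreover have "w \<noteq> 0" using \<open>1 = \<Phi> * w\<close> by auto
      ultimately show False using P0 dP by (simp add: degree_mult_eq)
    qed
    fix a b assume ab: "\<Phi> = a * b"
    have "evK a * evK b = 0" using eP ab by (simp add: rhom_mult[OF hev])
    hence "evK a = 0 \<or> evK b = 0" by simp
    thus "a dvd 1 \<or> b dvd 1"
    proof
      assume "evK a = 0"
      then obtain w where aw: "a = \<Phi> * w" using ker by blast
      have "\<Phi> * 1 = \<Phi> * (w * b)" by (metis ab aw mult.assoc mult_1_right)
      hence "w * b = 1" using P0 by (metis mult_left_cancel)
      thus ?thesis by (metis dvd_triv_right)
    next
      assume "evK b = 0"
      then obtain w where bw: "b = \<Phi> * w" using ker by blast
      have "\<Phi> * 1 = \<Phi> * (w * a)" by (metis ab bw mult.assoc mult.commute mult_1_right)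
      hence "w * a = 1" using P0 by (metis mult_left_cancel)
      thus ?thesis by (metis dvd_triv_right)
    qed
  qed
  define K where "K = gen_field \<kappa> {u, v}"
  have K: "is_subfield K" unfolding K_def by (rule gen_field_sub)
  have Kk: "\<kappa> a \<in> K" for a unfolding K_def by (rule gen_field_emb)
  have Ku: "u \<in> K" "v \<in> K" unfolding K_def by (auto intro: gen_field_gen)
  have Kt: "t \<in> K"
  proof -
    define t' where "t' = - \<kappa> \<gamma> / t ^ (p + 1)"
    have qt: "v * t ^ 2 + u * t = \<kappa> \<gamma>" unfolding u_def v_def using t0
      by (simp add: field_simps power2_eq_square power_add)
    have qt': "v * t' ^ 2 + u * t' = \<kappa> \<gamma>" unfolding u_def v_def t'_def using t0
      by (simp add: field_simps power2_eq_square power_add)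
    define a where "a = fst (abseq (\<kappa> \<gamma>) u v p)"
    define b where "b = snd (abseq (\<kappa> \<gamma>) u v p)"
    have ta: "t ^ p = a + b * t" unfolding a_def b_def by (rule abseq_pow[OF v0 qt])
    have ta': "t' ^ p = a + b * t'" unfolding a_def b_def by (rule abseq_pow[OF v0 qt'])
    have abK: "a \<in> K" "b \<in> K" using abseq_in[OF K Kk Ku, of \<gamma> p] unfolding a_def b_def by auto
    have b0: "b \<noteq> 0"
    proof
      assume "b = 0"
      hence "t ^ p = t' ^ p" using ta ta' by simp
      hence "t = t'" by (rule frob_inj[OF cf(1) cf(5)])
      hence "t * t ^ (p + 1) = - \<kappa> \<gamma>" unfolding t'_def using t0 by (simp add: field_simps)
      moreover have mg: "to_fract [:- \<gamma>:] = - to_fract [:\<gamma>:]"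
      proof -
        have "[:- \<gamma>:] = - [:\<gamma>:]" by simp
        thus ?thesis by (metis to_fract_uminus)
      qed
      ultimately have "to_fract (T ^ (p + 2)) = to_fract [:- \<gamma>:]" using tT[of "p + 2"]
        by (simp add: \<kappa>_def power_add mult.commute)
      hence "T ^ (p + 2) = [:- \<gamma>:]" by (simp only: to_fract_eq_iff)
      hence "degree (T ^ (p + 2)) = 0" by simp
      thus False by (simp add: T_def degree_power_eq)
    qed
    have "t = (v - a) / b" using ta b0 unfolding v_def by (simp add: field_simps)
    thus ?thesis using abK Ku K by (simp add: subfield_divide subfield_diff)
  qed
  have Kpoly: "to_fract a \<in> K" for a :: "'a poly"
  proof (induction a)
    case 0 show ?case using K by (simp add: subfield_0)
  next
    case (pCons c a)
    have "to_fract (pCons c a) = \<kappa> c + t * to_fract a"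
    proof -
      have "to_fract (pCons c a) = to_fract ([:c:] + [:0, 1:] * a)" by simp
      also have "\<dots> = to_fract [:c:] + to_fract [:0, 1:] * to_fract a" by (simp only: to_fract_add to_fract_mult)
      finally show ?thesis unfolding \<kappa>_def t_def .
    qed
    moreover have "\<kappa> c + t * to_fract a \<in> K" by (rule subfield_add[OF K Kk subfield_mult[OF K Kt pCons.IH]])
    ultimately show ?case by simp
  qed
  have "gen_field (\<lambda>c. to_fract [:c:]) {u, v} = UNIV"
  proof (rule set_eqI, rule iffI)
    fix x :: "'a poly fract" show "x \<in> UNIV" by simp
  next
    fix x :: "'a poly fract"
    show "x \<in> gen_field (\<lambda>c. to_fract [:c:]) {u, v}"
    proof (cases x)
      case (Fract a b)
      hence "x = to_fract a / to_fract b" by (simp add: Fract_conv_to_fract)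
      moreover have "to_fract a / to_fract b \<in> K" by (rule subfield_divide[OF K Kpoly Kpoly])
      moreover have "K = gen_field (\<lambda>c. to_fract [:c:]) {u, v}" unfolding K_def \<kappa>_def ..
      ultimately show ?thesis by simp
    qed
  qed
  moreover have "\<forall>P. eval_kt P u v = 0 \<longleftrightarrow> \<Phi> dvd P" using ker evK_eq by simp
  ultimately have "rational_quotient \<Phi>"
    unfolding rational_quotient_def by blast
  thus ?thesis using irr unfolding \<Phi>_def by simp
qed

lemma part3:
  fixes F :: "'a::alg_closed_field poly poly"
  assumes ch: "CHAR('a) = p" "p > 0" and F: "F = (polyX ^ p + polyY ^ (p + 1)) * polyY"
  shows "generally_rational F"
proof -
  have "{c::'a. \<not> (irreducible (F - polyC c) \<and> rational_quotient (F - polyC c))} \<subseteq> {0}"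
    using part3_one[OF ch F] by blast
  thus ?thesis unfolding generally_rational_def by (rule finite_subset) simp
qed




theorem mainTheorem12:
  fixes p :: nat and F :: "'a::alg_closed_field poly poly"
  assumes "CHAR('a) = p" and "p > 0"
    and "F = (polyX ^ p + polyY ^ (p + 1)) * polyY"
  shows "kFrac {to_fract F, to_fract polyY} = kFrac {to_fract (polyX ^ p), to_fract polyY}
       \<and> good_pseudo_field_generator p F
       \<and> generally_rational F
       \<and> \<not> field_generator F"
  using part1[OF assms(3)] part2[OF assms(3) assms(1,2)] part3[OF assms(1,2,3)] part4[OF assms(1,2,3)]
  by blast

end
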